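(* Let $(E,\|\cdot\|)$ be an $n$-dimensional normed space over $K$. Then $E$ satisfies (SE) if and only if the following two conditions hold: (1) each $(n-1)$-dimensional subspace of $E$ satisfies (SE); (2) each $2$-dimensional subspace $F$ of $E'$ satisfies either $\dim_{K^\vee}F^\vee=2$, or $F\cong([1,x],|\cdot|_t)$ for some $x\in K^\vee\setminus K$ and $t>0$ with $t\cdot d(x,K)\notin V_K$.
   Context: $K$ is a complete non-archimedean non-trivially valued field which is not spherically complete, with valuation group $V_K=\{|x|:x\in K\setminus\{0\}\}$; $K^\vee$ is a fixed spherically complete immediate extension of $K$. Normed spaces are finite-dimensional non-archimedean normed spaces over $K$; $E'$ is the dual with operator norm; $\cong$ denotes isometric isomorphism. A normed space $E$ satisfies (SE) if for each subspace $D\subseteq E$ and each $f\in D'$ with $\|f\|=1$ there is an extension $\tilde f\in E'$ of $f$ with $\|\tilde f\|=1$. A subset $X\subseteq E\setminus\{0\}$ is orthogonal if $\|\sum\lambda_ix_i\|=\max\|\lambda_ix_i\|$ for finitely many distinct $x_i\in X$; $\dim_{K^\vee}E^\vee$ denotes the cardinality of a maximal orthogonal subset of $E$. For $t>0$, $([1,x],|\cdot|_t)$ is the $K$-linear span of $1,x$ in $K^\vee$ with norm $|z|_t=t|z|$; $d(x,K)=\inf_{a\in K}|x-a|$. *)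

theory Defs
  imports "HOL-Analysis.Analysis" "HOL-Library.Function_Algebras"
begin

definition nonarch_abs :: "('a::field \<Rightarrow> real) \<Rightarrow> bool" where
  "nonarch_abs v \<longleftrightarrow> (\<forall>x. 0 \<le> v x) \<and> (\<forall>x. v x = 0 \<longleftrightarrow> x = 0)
     \<and> (\<forall>x y. v (x * y) = v x * v y) \<and> (\<forall>x y. v (x + y) \<le> max (v x) (v y))"

definition nontrivial_abs :: "('a::field \<Rightarrow> real) \<Rightarrow> bool" where
  "nontrivial_abs v \<longleftrightarrow> (\<exists>x. x \<noteq> 0 \<and> v x \<noteq> 1)"

definition abs_complete :: "('a::field \<Rightarrow> real) \<Rightarrow> bool" where
  "abs_complete v \<longleftrightarrow> (\<forall>s::nat \<Rightarrow> 'a.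
     (\<forall>e>0. \<exists>M. \<forall>m\<ge>M. \<forall>k\<ge>M. v (s m - s k) < e)
       \<longrightarrow> (\<exists>l. \<forall>e>0. \<exists>M. \<forall>k\<ge>M. v (s k - l) < e))"

definition vball :: "('a::field \<Rightarrow> real) \<Rightarrow> 'a \<Rightarrow> real \<Rightarrow> 'a set" where
  "vball v c r = {y. v (y - c) \<le> r}"

definition spherically_complete :: "('a::field \<Rightarrow> real) \<Rightarrow> bool" where
  "spherically_complete v \<longleftrightarrow> (\<forall>(c::nat \<Rightarrow> 'a) (r::nat \<Rightarrow> real).
     (\<forall>k. 0 < r k) \<and> (\<forall>k. vball v (c (Suc k)) (r (Suc k)) \<subseteq> vball v (c k) (r k))
       \<longrightarrow> (\<Inter>k. vball v (c k) (r k)) \<noteq> {})"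

definition value_group :: "('a::field \<Rightarrow> real) \<Rightarrow> real set" where
  "value_group v = {v x | x. x \<noteq> 0}"

text \<open>\<open>(L, bv)\<close> is an immediate extension of \<open>(K, av)\<close> via the embedding \<open>\<iota>\<close>:
  \<open>\<iota>\<close> is a field homomorphism preserving the absolute value, the value groups coincide
  and the residue field of \<open>L\<close> is the image of the residue field of \<open>K\<close>.\<close>
definition immediate_extension ::
  "('a::field \<Rightarrow> real) \<Rightarrow> ('b::field \<Rightarrow> real) \<Rightarrow> ('a \<Rightarrow> 'b) \<Rightarrow> bool" where
  "immediate_extension av bv \<iota> \<longleftrightarrow>
     (\<forall>a c. \<iota> (a + c) = \<iota> a + \<iota> c) \<and> (\<forall>a c. \<iota> (a * c) = \<iota> a * \<iota> c) \<and> \<iota> 1 = 1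
     \<and> (\<forall>a. bv (\<iota> a) = av a)
     \<and> value_group bv = value_group av
     \<and> (\<forall>y. bv y \<le> 1 \<longrightarrow> (\<exists>a. av a \<le> 1 \<and> bv (y - \<iota> a) < 1))"

text \<open>A normed space is given by a scalar multiplication \<open>sc\<close> (a K-vector space
  structure on the ambient type), a carrier subspace \<open>E\<close> and a norm \<open>N\<close> on \<open>E\<close>.\<close>
definition na_normed_space ::
  "('a::field \<Rightarrow> real) \<Rightarrow> ('a \<Rightarrow> 'e::ab_group_add \<Rightarrow> 'e) \<Rightarrow> 'e set \<Rightarrow> ('e \<Rightarrow> real) \<Rightarrow> bool" where
  "na_normed_space av sc E N \<longleftrightarrow> module.subspace sc E
     \<and> (\<forall>x\<in>E. 0 \<le> N x) \<and> (\<forall>x\<in>E. N x = 0 \<longleftrightarrow> x = 0)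
     \<and> (\<forall>c. \<forall>x\<in>E. N (sc c x) = av c * N x)
     \<and> (\<forall>x\<in>E. \<forall>y\<in>E. N (x + y) \<le> max (N x) (N y))"

definition fin_dim :: "('a::field \<Rightarrow> 'e::ab_group_add \<Rightarrow> 'e) \<Rightarrow> 'e set \<Rightarrow> bool" where
  "fin_dim sc E \<longleftrightarrow> (\<exists>B. finite B \<and> B \<subseteq> E \<and> module.span sc B = E)"

text \<open>Linear functionals on a subspace \<open>D\<close>, normalised to be zero outside \<open>D\<close>.\<close>
definition dual :: "('a::field \<Rightarrow> 'e::ab_group_add \<Rightarrow> 'e) \<Rightarrow> 'e set \<Rightarrow> ('e \<Rightarrow> 'a) set" where
  "dual sc D = {f. (\<forall>x\<in>D. \<forall>y\<in>D. f (x + y) = f x + f y)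
                    \<and> (\<forall>c. \<forall>x\<in>D. f (sc c x) = c * f x)
                    \<and> (\<forall>x. x \<notin> D \<longrightarrow> f x = 0)}"

definition dscale :: "'a::field \<Rightarrow> ('e \<Rightarrow> 'a) \<Rightarrow> ('e \<Rightarrow> 'a)" where
  "dscale c f = (\<lambda>x. c * f x)"

definition opnorm :: "('a::field \<Rightarrow> real) \<Rightarrow> 'e::zero set \<Rightarrow> ('e \<Rightarrow> real) \<Rightarrow> ('e \<Rightarrow> 'a) \<Rightarrow> real" where
  "opnorm av D N f = Sup ({av (f x) / N x | x. x \<in> D \<and> x \<noteq> 0} \<union> {0})"

definition SE ::
  "('a::field \<Rightarrow> real) \<Rightarrow> ('a \<Rightarrow> 'e::ab_group_add \<Rightarrow> 'e) \<Rightarrow> 'e set \<Rightarrow> ('e \<Rightarrow> real) \<Rightarrow> bool" where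
  "SE av sc E N \<longleftrightarrow> (\<forall>D f. module.subspace sc D \<and> D \<subseteq> E \<and> f \<in> dual sc D
       \<and> opnorm av D N f = 1
     \<longrightarrow> (\<exists>g \<in> dual sc E. (\<forall>x\<in>D. g x = f x) \<and> opnorm av E N g = 1))"

text \<open>Orthogonal subsets and \<open>dim_{K^\<or>} E^\<or>\<close> (cardinality of a maximal orthogonal subset).\<close>
definition na_orthogonal ::
  "('a::field \<Rightarrow> 'e::ab_group_add \<Rightarrow> 'e) \<Rightarrow> 'e set \<Rightarrow> ('e \<Rightarrow> real) \<Rightarrow> 'e set \<Rightarrow> bool" where
  "na_orthogonal sc E N X \<longleftrightarrow> X \<subseteq> E - {0} \<and>
     (\<forall>Y (l::'e \<Rightarrow> 'a). finite Y \<and> Y \<subseteq> X \<and> Y \<noteq> {} \<longrightarrow>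
        N (\<Sum>y\<in>Y. sc (l y) y) = Max ((\<lambda>y. N (sc (l y) y)) ` Y))"

definition max_orthogonal ::
  "('a::field \<Rightarrow> 'e::ab_group_add \<Rightarrow> 'e) \<Rightarrow> 'e set \<Rightarrow> ('e \<Rightarrow> real) \<Rightarrow> 'e set \<Rightarrow> bool" where
  "max_orthogonal sc E N X \<longleftrightarrow> na_orthogonal sc E N X \<and>
     (\<forall>Y. na_orthogonal sc E N Y \<and> X \<subseteq> Y \<longrightarrow> Y = X)"

definition orth_dim ::
  "('a::field \<Rightarrow> 'e::ab_group_add \<Rightarrow> 'e) \<Rightarrow> 'e set \<Rightarrow> ('e \<Rightarrow> real) \<Rightarrow> nat" where
  "orth_dim sc E N = card (SOME X. max_orthogonal sc E N X)"

definition span1x :: "('a::field \<Rightarrow> 'b::field) \<Rightarrow> 'b \<Rightarrow> 'b set" where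
  "span1x \<iota> x = {\<iota> a + \<iota> c * x | a c. True}"

definition dist_to_K :: "('b::field \<Rightarrow> real) \<Rightarrow> ('a::field \<Rightarrow> 'b) \<Rightarrow> 'b \<Rightarrow> real" where
  "dist_to_K bv \<iota> x = Inf {bv (x - \<iota> a) | a. True}"

definition iso_span1x ::
  "('b::field \<Rightarrow> real) \<Rightarrow> ('a::field \<Rightarrow> 'b) \<Rightarrow> ('a \<Rightarrow> 'e::ab_group_add \<Rightarrow> 'e) \<Rightarrow> 'e set
     \<Rightarrow> ('e \<Rightarrow> real) \<Rightarrow> 'b \<Rightarrow> real \<Rightarrow> bool" where
  "iso_span1x bv \<iota> sc F N x t \<longleftrightarrow> (\<exists>T. bij_betw T F (span1x \<iota> x)
     \<and> (\<forall>f\<in>F. \<forall>g\<in>F. T (f + g) = T f + T g)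
     \<and> (\<forall>c. \<forall>f\<in>F. T (sc c f) = \<iota> c * T f)
     \<and> (\<forall>f\<in>F. t * bv (T f) = N f))"

end

theory Submission
  imports Defs
begin

section \<open>Absolute values\<close>

context
  fixes v :: "'a::field \<Rightarrow> real"
  assumes na: "nonarch_abs v"
begin

lemma va_nonneg[simp]: "0 \<le> v x" using na unfolding nonarch_abs_def by auto
lemma va_zero_iff[simp]: "v x = 0 \<longleftrightarrow> x = 0" using na unfolding nonarch_abs_def by auto
lemma va_mult: "v (x * y) = v x * v y" using na unfolding nonarch_abs_def by auto
lemma va_add: "v (x + y) \<le> max (v x) (v y)" using na unfolding nonarch_abs_def by auto
lemma va_0[simp]: "v 0 = 0" by simp
lemma va_pos: "x \<noteq> 0 \<Longrightarrow> 0 < v x" using va_nonneg[of x] va_zero_iff[of x] by linarith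
lemma va_1[simp]: "v 1 = 1"
proof -
  have "v 1 = v 1 * v 1" using va_mult[of 1 1] by simp
  moreover have "v 1 \<noteq> 0" by simp
  ultimately show ?thesis by (metis mult_cancel_right1)
qed
lemma va_minus1[simp]: "v (-1) = 1"
proof -
  have "v (-1) * v (-1) = 1" using va_mult[of "-1" "-1"] by simp
  moreover have "v (-1) \<ge> 0" by simp
  ultimately have "(v (-1) - 1) * (v (-1) + 1) = 0" by (simp add: algebra_simps)
  then show ?thesis using \<open>v (-1) \<ge> 0\<close> by auto
qed
lemma va_uminus[simp]: "v (- x) = v x"
  using va_mult[of "-1" x] by simp
lemma va_commute: "v (x - y) = v (y - x)"
  by (metis minus_diff_eq va_uminus)
lemma va_inverse: "v (inverse x) = inverse (v x)"
proof (cases "x = 0")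
  case False
  then have "v (inverse x) * v x = 1" using va_mult[of "inverse x" x] by simp
  then show ?thesis by (metis inverse_unique mult.commute)
qed simp
lemma va_divide: "v (x / y) = v x / v y"
  by (simp add: divide_inverse va_mult va_inverse)
lemma va_diff: "v (x - y) \<le> max (v x) (v y)"
  using va_add[of x "-y"] by simp
lemma va_strict: "v y < v x \<Longrightarrow> v (x + y) = v x"
proof -
  assume a: "v y < v x"
  have "v (x + y) \<le> v x" using va_add[of x y] a by simp
  moreover have "v x \<le> max (v (x + y)) (v y)" using va_add[of "x + y" "-y"] by simp
  ultimately show ?thesis using a by linarith
qed
lemma va_strict_diff: "v y < v x \<Longrightarrow> v (x - y) = v x"
  using va_strict[of "-y" x] by simp
lemma va_max_eq: "v x \<noteq> v y \<Longrightarrow> v (x + y) = max (v x) (v y)"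
  by (metis add.commute max.absorb3 max.absorb4 linorder_neq_iff va_strict)

end

lemma value_group_mult:
  assumes "nonarch_abs v" "a \<in> value_group v" "b \<in> value_group v"
  shows "a * b \<in> value_group v"
proof -
  obtain x y where "a = v x" "x \<noteq> 0" "b = v y" "y \<noteq> 0" using assms unfolding value_group_def by auto
  then show ?thesis unfolding value_group_def using va_mult[OF assms(1), of x y]
    by (auto intro!: exI[of _ "x*y"])
qed

lemma value_group_inverse:
  assumes "nonarch_abs v" "a \<in> value_group v"
  shows "inverse a \<in> value_group v"
proof -
  obtain x where "a = v x" "x \<noteq> 0" using assms unfolding value_group_def by auto
  then show ?thesis unfolding value_group_def using va_inverse[OF assms(1), of x]
    by (auto intro!: exI[of _ "inverse x"])
qed

lemma value_group_divide:
  assumes "nonarch_abs v" "a \<in> value_group v" "b \<in> value_group v"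
  shows "a / b \<in> value_group v"
  using value_group_mult[OF assms(1,2) value_group_inverse[OF assms(1,3)]] by (simp add: divide_inverse)

lemma value_group_pos: "nonarch_abs v \<Longrightarrow> a \<in> value_group v \<Longrightarrow> 0 < a"
  unfolding value_group_def using va_pos by blast

lemma value_group_1: "nonarch_abs v \<Longrightarrow> 1 \<in> value_group v"
  unfolding value_group_def by (auto intro!: exI[of _ 1])

lemma vector_space_dscale: "vector_space (dscale :: 'a::field \<Rightarrow> ('e \<Rightarrow> 'a) \<Rightarrow> ('e \<Rightarrow> 'a))"
  unfolding vector_space_def dscale_def by (auto simp: fun_eq_iff algebra_simps)

locale NA = vector_space sc
  for sc :: "'a::field \<Rightarrow> 'e::ab_group_add \<Rightarrow> 'e" +
  fixes av :: "'a \<Rightarrow> real" and E :: "'e set" and N :: "'e \<Rightarrow> real"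
  assumes av: "nonarch_abs av" and compl: "abs_complete av"
    and nns: "na_normed_space av sc E N" and fdim: "fin_dim sc E"
begin

lemmas av_simps[simp] = va_0[OF av] va_1[OF av] va_uminus[OF av] va_minus1[OF av] va_nonneg[OF av] va_zero_iff[OF av]
lemmas av_mult = va_mult[OF av]

lemma E_sub: "subspace E" using nns unfolding na_normed_space_def by auto
lemma N_nonneg: "x \<in> E \<Longrightarrow> 0 \<le> N x" using nns unfolding na_normed_space_def by auto
lemma N_zero_iff: "x \<in> E \<Longrightarrow> N x = 0 \<longleftrightarrow> x = 0" using nns unfolding na_normed_space_def by auto
lemma N_pos: "x \<in> E \<Longrightarrow> x \<noteq> 0 \<Longrightarrow> 0 < N x" using N_nonneg N_zero_iff by force
lemma N_0[simp]: "N 0 = 0" using N_zero_iff subspace_0[OF E_sub] by auto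
lemma N_scale: "x \<in> E \<Longrightarrow> N (sc c x) = av c * N x" using nns unfolding na_normed_space_def by auto
lemma N_add: "x \<in> E \<Longrightarrow> y \<in> E \<Longrightarrow> N (x + y) \<le> max (N x) (N y)"
  using nns unfolding na_normed_space_def by auto
lemma E_add: "x \<in> E \<Longrightarrow> y \<in> E \<Longrightarrow> x + y \<in> E" using subspace_add[OF E_sub] .
lemma E_diff: "x \<in> E \<Longrightarrow> y \<in> E \<Longrightarrow> x - y \<in> E" using subspace_diff[OF E_sub] .
lemma E_scale: "x \<in> E \<Longrightarrow> sc c x \<in> E" using subspace_scale[OF E_sub] .
lemma E_uminus: "x \<in> E \<Longrightarrow> - x \<in> E" using subspace_neg[OF E_sub] .
lemma E_0: "0 \<in> E" using subspace_0[OF E_sub] .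
lemma N_uminus: "x \<in> E \<Longrightarrow> N (- x) = N x"
  using N_scale[of x "-1"] va_minus1[OF av] by (simp add: scale_minus_left)
lemma N_commute: "x \<in> E \<Longrightarrow> y \<in> E \<Longrightarrow> N (x - y) = N (y - x)"
  by (metis E_diff N_uminus minus_diff_eq)
lemma N_diff: "x \<in> E \<Longrightarrow> y \<in> E \<Longrightarrow> N (x - y) \<le> max (N x) (N y)"
  using N_add[of x "-y"] N_uminus[of y] E_uminus[of y] by simp
lemma N_strict: "x \<in> E \<Longrightarrow> y \<in> E \<Longrightarrow> N y < N x \<Longrightarrow> N (x + y) = N x"
proof -
  assume a: "x \<in> E" "y \<in> E" "N y < N x"
  have "N (x + y) \<le> N x" using N_add[OF a(1,2)] a(3) by simp
  moreover have "N x \<le> max (N (x + y)) (N y)" using N_add[of "x + y" "-y"] a N_uminus E_uminus E_add by simp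
  ultimately show ?thesis using a by linarith
qed
lemma N_strict_diff: "x \<in> E \<Longrightarrow> y \<in> E \<Longrightarrow> N y < N x \<Longrightarrow> N (x - y) = N x"
  using N_strict[of x "-y"] N_uminus E_uminus by simp

lemma span_E: "S \<subseteq> E \<Longrightarrow> span S \<subseteq> E"
  using span_minimal[OF _ E_sub] .

lemma dist_pos_aux:
  assumes "finite S"
  shows "S \<subseteq> E \<Longrightarrow> v \<in> E \<Longrightarrow> v \<notin> span S \<Longrightarrow> \<exists>c>0. \<forall>y\<in>span S. c \<le> N (v - y)"
  using assms
proof (induction S arbitrary: v rule: finite_induct)
  case empty
  then show ?case using N_pos[of v] by (auto intro!: exI[of _ "N v"])
next
  case (insert u S)
  show ?case
  proof (cases "u \<in> span S")
    case True
    then have "span (insert u S) = span S" using span_redundant by blast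
    then show ?thesis using insert by auto
  next
    case False
    have uE: "u \<in> E" and SE: "S \<subseteq> E" using insert by auto
    obtain cu where cu: "cu > 0" "\<And>z. z \<in> span S \<Longrightarrow> cu \<le> N (u - z)"
      using insert.IH[OF SE uE False] by blast
    have A: "av l * cu \<le> N (sc l u + z)" if "z \<in> span S" for l z
    proof (cases "l = 0")
      case True
      then show ?thesis using N_nonneg[of z] span_E[OF SE] that by auto
    next
      case False
      define z' where "z' = - sc (inverse l) z"
      have z'S: "z' \<in> span S" unfolding z'_def using span_scale[OF that] span_neg by blast
      have eq: "sc l u + z = sc l (u - z')"
        using False by (simp add: z'_def scale_right_distrib)
      have "u - z' \<in> E" using E_diff[OF uE] span_E[OF SE] z'S by auto
      then have "N (sc l u + z) = av l * N (u - z')" using eq N_scale by simp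
      moreover have "cu \<le> N (u - z')" using cu(2)[OF z'S] .
      ultimately show ?thesis using va_nonneg[OF av, of l] by (simp add: mult_left_mono)
    qed
    show ?thesis
    proof (rule ccontr)
      assume nc: "\<not> (\<exists>c>0. \<forall>y\<in>span (insert u S). c \<le> N (v - y))"
      have "\<forall>k::nat. \<exists>y\<in>span (insert u S). N (v - y) < inverse (real (Suc k))"
      proof
        fix k :: nat
        have "inverse (real (Suc k)) > 0" by simp
        then show "\<exists>y\<in>span (insert u S). N (v - y) < inverse (real (Suc k))"
          using nc by (meson not_le)
      qed
      then obtain y where y: "\<And>k. y k \<in> span (insert u S)" "\<And>k. N (v - y k) < inverse (real (Suc k))"
        by metis
      have "\<forall>k. \<exists>l. y k - sc l u \<in> span S" using y(1) span_breakdown_eq by blast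
      then obtain lam where lam: "\<And>k. y k - sc (lam k) u \<in> span S" by metis
      define z where "z k = y k - sc (lam k) u" for k
      have zS: "z k \<in> span S" for k using lam z_def by auto
      have yE: "y k \<in> E" for k using y(1) span_E insert by blast
      have vyE: "v - y k \<in> E" for k using yE insert E_diff by auto
      have yz: "y k = sc (lam k) u + z k" for k unfolding z_def by simp
      have cauchy: "\<forall>e>0. \<exists>M. \<forall>m\<ge>M. \<forall>k\<ge>M. av (lam m - lam k) < e"
      proof (intro allI impI)
        fix e :: real assume "e > 0"
        then have "e * cu > 0" using cu by simp
        then obtain M where M: "inverse (real (Suc M)) < e * cu" using reals_Archimedean by blast
        show "\<exists>M. \<forall>m\<ge>M. \<forall>k\<ge>M. av (lam m - lam k) < e"
        proof (intro exI allI impI)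
          fix m k assume mk: "M \<le> m" "M \<le> k"
          have "y m - y k = sc (lam m - lam k) u + (z m - z k)"
            using yz[of m] yz[of k] by (simp add: scale_left_diff_distrib algebra_simps)
          then have "av (lam m - lam k) * cu \<le> N (y m - y k)"
            using A[of "z m - z k" "lam m - lam k"] span_diff zS by simp
          also have "y m - y k = (v - y k) - (v - y m)" by simp
          also have "N \<dots> \<le> max (N (v - y k)) (N (v - y m))" using N_diff vyE by blast
          also have "\<dots> < e * cu"
          proof -
            have "inverse (real (Suc k)) \<le> inverse (real (Suc M))" using mk by (simp add: field_simps)
            moreover have "inverse (real (Suc m)) \<le> inverse (real (Suc M))" using mk by (simp add: field_simps)
            ultimately show ?thesis using y(2)[of k] y(2)[of m] M unfolding max_less_iff_conj by linarith
          qed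
          finally show "av (lam m - lam k) < e" using cu by simp
        qed
      qed
      then obtain l where l: "\<And>e. e > 0 \<Longrightarrow> \<exists>M. \<forall>k\<ge>M. av (lam k - l) < e"
        using compl unfolding abs_complete_def by blast
      have vl: "v - sc l u \<notin> span S"
      proof
        assume "v - sc l u \<in> span S"
        then have "v \<in> span (insert u S)" using span_breakdown_eq by blast
        then show False using insert by blast
      qed
      have vlE: "v - sc l u \<in> E" using insert E_diff E_scale by auto
      obtain c' where c': "c' > 0" "\<And>z. z \<in> span S \<Longrightarrow> c' \<le> N (v - sc l u - z)"
        using insert.IH[OF SE vlE vl] by blast
      obtain M1 where M1: "inverse (real (Suc M1)) < c'" using reals_Archimedean c' by blast
      have "c' / (N u + 1) > 0" using c' N_nonneg[OF uE] by simp
      then obtain M2 where M2: "\<And>k. k \<ge> M2 \<Longrightarrow> av (lam k - l) < c' / (N u + 1)" using l by blast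
      define k where "k = max M1 M2"
      have eqk: "v - sc l u - z k = (v - y k) + sc (lam k - l) u"
        using yz[of k] by (simp add: scale_left_diff_distrib algebra_simps)
      have "N ((v - y k) + sc (lam k - l) u) \<le> max (N (v - y k)) (N (sc (lam k - l) u))"
        using N_add vyE E_scale uE by blast
      moreover have "N (v - y k) < c'"
      proof -
        have "inverse (real (Suc k)) \<le> inverse (real (Suc M1))" unfolding k_def by (simp add: field_simps)
        then show ?thesis using y(2)[of k] M1 by linarith
      qed
      moreover have "N (sc (lam k - l) u) < c'"
      proof -
        have a: "av (lam k - l) < c' / (N u + 1)" using M2[of k] unfolding k_def by simp
        have "N (sc (lam k - l) u) = av (lam k - l) * N u" using N_scale uE by simp
        also have "\<dots> \<le> c' / (N u + 1) * N u"
          by (rule mult_right_mono) (use a N_nonneg[OF uE] in auto)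
        also have "\<dots> < c'" using c' N_nonneg[OF uE] by (simp add: field_simps)
        finally show ?thesis .
      qed
      ultimately have "N ((v - y k) + sc (lam k - l) u) < c'" by linarith
      then have "N (v - sc l u - z k) < c'" by (subst eqk)
      then show False using c'(2)[OF zS[of k]] by simp
    qed
  qed
qed

lemma E_basis: obtains B where "finite B" "B \<subseteq> E" "span B = E"
  using fdim unfolding fin_dim_def by blast

lemma finite_span_of_subspace:
  assumes "subspace X" "X \<subseteq> E"
  obtains S where "finite S" "S \<subseteq> X" "independent S" "span S = X"
proof -
  obtain B0 where B0: "finite B0" "B0 \<subseteq> E" "span B0 = E" using E_basis by blast
  obtain B where B: "B \<subseteq> X" "independent B" "X \<subseteq> span B" "card B = dim X" using basis_exists by blast
  have "finite B" using independent_span_bound[OF B0(1) B(2)] B(1) assms(2) B0(3) by auto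
  moreover have "span B = X" using B span_minimal[OF B(1) assms(1)] by auto
  ultimately show ?thesis using that B by blast
qed

lemma dist_pos:
  assumes "subspace X" "X \<subseteq> E" "v \<in> E" "v \<notin> X"
  shows "\<exists>c>0. \<forall>y\<in>X. c \<le> N (v - y)"
proof -
  obtain S where S: "finite S" "S \<subseteq> X" "span S = X" using finite_span_of_subspace[OF assms(1,2)] by metis
  have "S \<subseteq> E" using S assms by blast
  from dist_pos_aux[OF S(1) this assms(3)] show ?thesis using assms(4) S(3) by simp
qed

lemma dual_0: "subspace X \<Longrightarrow> f \<in> dual sc X \<Longrightarrow> f 0 = 0"
proof -
  assume "subspace X" "f \<in> dual sc X"
  then have "f (sc 0 0) = 0 * f 0" unfolding dual_def using subspace_0[of X] by blast
  then show "f 0 = 0" by simp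
qed

lemma dual_scale: "f \<in> dual sc X \<Longrightarrow> x \<in> X \<Longrightarrow> f (sc c x) = c * f x"
  unfolding dual_def by auto
lemma dual_add: "f \<in> dual sc X \<Longrightarrow> x \<in> X \<Longrightarrow> y \<in> X \<Longrightarrow> f (x + y) = f x + f y"
  unfolding dual_def by auto
lemma dual_out: "f \<in> dual sc X \<Longrightarrow> x \<notin> X \<Longrightarrow> f x = 0"
  unfolding dual_def by auto
lemma dual_uminus: "subspace X \<Longrightarrow> f \<in> dual sc X \<Longrightarrow> x \<in> X \<Longrightarrow> f (- x) = - f x"
  using dual_scale[of f X x "-1"] by (simp add: scale_minus_left)
lemma dual_diff: "subspace X \<Longrightarrow> f \<in> dual sc X \<Longrightarrow> x \<in> X \<Longrightarrow> y \<in> X \<Longrightarrow> f (x - y) = f x - f y"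
  using dual_add[of f X x "-y"] dual_uminus[of X f y] subspace_neg[of X y] by simp

lemma bounded:
  assumes X: "subspace X" "X \<subseteq> E" and f: "f \<in> dual sc X"
  shows "\<exists>C\<ge>0. \<forall>x\<in>X. av (f x) \<le> C * N x"
proof (cases "\<forall>x\<in>X. f x = 0")
  case True
  then show ?thesis by (auto intro!: exI[of _ 0] simp: va_0[OF av])
next
  case False
  then obtain x0 where x0: "x0 \<in> X" "f x0 \<noteq> 0" by auto
  define v where "v = sc (inverse (f x0)) x0"
  have vX: "v \<in> X" unfolding v_def using subspace_scale[OF X(1) x0(1)] .
  have fv: "f v = 1" unfolding v_def using dual_scale[OF f x0(1)] x0(2) by simp
  define K0 where "K0 = {x\<in>X. f x = 0}"
  have K0: "subspace K0"
    unfolding K0_def subspace_def using subspace_0[OF X(1)] dual_0[OF X(1) f]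
      subspace_add[OF X(1)] subspace_scale[OF X(1)] dual_add[OF f] dual_scale[OF f] by auto
  have "K0 \<subseteq> E" using X unfolding K0_def by auto
  moreover have "v \<notin> K0" using fv unfolding K0_def by auto
  ultimately obtain c where c: "c > 0" "\<And>y. y \<in> K0 \<Longrightarrow> c \<le> N (v - y)"
    using dist_pos[OF K0] vX X(2) by blast
  show ?thesis
  proof (intro exI[of _ "inverse c"] conjI ballI)
    show "0 \<le> inverse c" using c by simp
    fix x assume xX: "x \<in> X"
    show "av (f x) \<le> inverse c * N x"
    proof (cases "f x = 0")
      case True then show ?thesis using N_nonneg xX X c by (auto simp: va_0[OF av])
    next
      case False
      define y where "y = v - sc (inverse (f x)) x"
      have yX: "y \<in> X" unfolding y_def using vX xX X(1) subspace_diff subspace_scale by blast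
      have "f y = 0" unfolding y_def using dual_diff[OF X(1) f vX] subspace_scale[OF X(1) xX]
          dual_scale[OF f xX] fv False by simp
      then have "y \<in> K0" using yX K0_def by auto
      have "x = sc (f x) (v - y)" unfolding y_def using False by simp
      then have "N x = av (f x) * N (v - y)"
        using N_scale[of "v - y" "f x"] vX yX X(2) E_diff by auto
      moreover have "c \<le> N (v - y)" using c(2)[OF \<open>y \<in> K0\<close>] .
      ultimately have "av (f x) * c \<le> N x" using va_nonneg[OF av] by (simp add: mult_left_mono)
      then show ?thesis using c by (simp add: field_simps)
    qed
  qed
qed

lemma opnorm_props:
  assumes X: "subspace X" "X \<subseteq> E" and f: "f \<in> dual sc X"
  shows "0 \<le> opnorm av X N f"
    and "\<And>x. x \<in> X \<Longrightarrow> av (f x) \<le> opnorm av X N f * N x"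
    and "\<And>C. 0 \<le> C \<Longrightarrow> (\<And>x. x \<in> X \<Longrightarrow> av (f x) \<le> C * N x) \<Longrightarrow> opnorm av X N f \<le> C"
proof -
  obtain C where C: "C \<ge> 0" "\<And>x. x \<in> X \<Longrightarrow> av (f x) \<le> C * N x" using bounded[OF X f] by blast
  let ?S = "{av (f x) / N x | x. x \<in> X \<and> x \<noteq> 0} \<union> {0}"
  have bdd: "bdd_above ?S"
  proof (rule bdd_aboveI[of _ C])
    fix s assume "s \<in> ?S"
    then consider "s = 0" | x where "x \<in> X" "x \<noteq> 0" "s = av (f x) / N x" by auto
    then show "s \<le> C"
    proof cases
      case 1 then show ?thesis using C by simp
    next
      case 2
      then have "N x > 0" using N_pos X by auto
      then show ?thesis using C(2)[OF 2(1)] 2(3) by (simp add: divide_le_eq)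
    qed
  qed
  show nn: "0 \<le> opnorm av X N f" unfolding opnorm_def by (rule cSup_upper[OF _ bdd]) simp
  show "av (f x) \<le> opnorm av X N f * N x" if "x \<in> X" for x
  proof (cases "x = 0")
    case True then show ?thesis using dual_0[OF X(1) f] by (simp add: va_0[OF av])
  next
    case False
    then have Np: "N x > 0" using N_pos X that by auto
    have "av (f x) / N x \<le> opnorm av X N f" unfolding opnorm_def
      by (rule cSup_upper[OF _ bdd]) (use that False in auto)
    then show ?thesis using Np by (simp add: divide_le_eq)
  qed
  show "opnorm av X N f \<le> D" if "0 \<le> D" "\<And>x. x \<in> X \<Longrightarrow> av (f x) \<le> D * N x" for D
    unfolding opnorm_def
  proof (rule cSup_least)
    show "?S \<noteq> {}" by simp
    fix s assume "s \<in> ?S"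
    then consider "s = 0" | x where "x \<in> X" "x \<noteq> 0" "s = av (f x) / N x" by auto
    then show "s \<le> D"
    proof cases
      case 1 then show ?thesis using that by simp
    next
      case 2
      then have "N x > 0" using N_pos X by auto
      then show ?thesis using that(2)[OF 2(1)] 2(3) by (simp add: divide_le_eq)
    qed
  qed
qed

end

context NA begin

sublocale dv: vector_space "dscale :: 'a \<Rightarrow> ('e \<Rightarrow> 'a) \<Rightarrow> ('e \<Rightarrow> 'a)"
  by (rule vector_space_dscale)

abbreviation nrm :: "('e \<Rightarrow> 'a) \<Rightarrow> real" where "nrm g \<equiv> opnorm av E N g"

lemma nrm_nonneg: "g \<in> dual sc E \<Longrightarrow> 0 \<le> nrm g"
  using opnorm_props(1)[OF E_sub subset_refl] .
lemma nrm_bound: "g \<in> dual sc E \<Longrightarrow> x \<in> E \<Longrightarrow> av (g x) \<le> nrm g * N x"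
  using opnorm_props(2)[OF E_sub subset_refl] .
lemma nrm_least: "g \<in> dual sc E \<Longrightarrow> 0 \<le> C \<Longrightarrow> (\<And>x. x \<in> E \<Longrightarrow> av (g x) \<le> C * N x) \<Longrightarrow> nrm g \<le> C"
  using opnorm_props(3)[OF E_sub subset_refl] .

lemma dual_dscale: "g \<in> dual sc X \<Longrightarrow> dscale c g \<in> dual sc X"
  unfolding dual_def dscale_def by (auto simp: algebra_simps)
lemma dual_plus: "g \<in> dual sc X \<Longrightarrow> h \<in> dual sc X \<Longrightarrow> g + h \<in> dual sc X"
  unfolding dual_def by (auto simp: algebra_simps)
lemma dual_zero: "0 \<in> dual sc X"
  unfolding dual_def by auto
lemma dual_minus: "g \<in> dual sc X \<Longrightarrow> h \<in> dual sc X \<Longrightarrow> g - h \<in> dual sc X"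
  unfolding dual_def by (auto simp: algebra_simps)
lemma dual_subspace: "dv.subspace (dual sc X)"
  unfolding dv.subspace_def using dual_zero dual_plus dual_dscale by blast

lemma dscale_apply[simp]: "dscale c g x = c * g x" unfolding dscale_def by simp

lemma nrm_dscale: assumes "g \<in> dual sc E" shows "nrm (dscale c g) = av c * nrm g"
proof -
  have le: "nrm (dscale c g) \<le> av c * nrm g"
    by (rule nrm_least[OF dual_dscale[OF assms]])
       (use nrm_nonneg[OF assms] nrm_bound[OF assms] in \<open>auto simp: av_mult mult.assoc intro: mult_left_mono\<close>)
  show ?thesis
  proof (cases "c = 0")
    case True
    then show ?thesis using le nrm_nonneg[OF dual_dscale[OF assms, of c]] by simp
  next
    case False
    have "nrm g \<le> av (inverse c) * nrm (dscale c g)"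
    proof (rule nrm_least[OF assms])
      show "0 \<le> av (inverse c) * nrm (dscale c g)" using nrm_nonneg[OF dual_dscale[OF assms, of c]] by simp
      fix x assume x: "x \<in> E"
      have "g x = inverse c * (dscale c g x)" using False by simp
      then have "av (g x) = av (inverse c) * av (dscale c g x)" using av_mult by metis
      also have "\<dots> \<le> av (inverse c) * (nrm (dscale c g) * N x)"
        by (rule mult_left_mono) (use nrm_bound[OF dual_dscale[OF assms] x] in auto)
      finally show "av (g x) \<le> av (inverse c) * nrm (dscale c g) * N x" by (simp add: mult.assoc)
    qed
    then have "av c * nrm g \<le> av c * (av (inverse c) * nrm (dscale c g))"
      by (rule mult_left_mono) simp
    then have "av c * nrm g \<le> nrm (dscale c g)"
      using False by (simp add: va_inverse[OF av] mult.assoc[symmetric])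
    then show ?thesis using le by simp
  qed
qed

lemma nrm_add: assumes "g \<in> dual sc E" "h \<in> dual sc E" shows "nrm (g + h) \<le> max (nrm g) (nrm h)"
proof (rule nrm_least[OF dual_plus[OF assms]])
  show "0 \<le> max (nrm g) (nrm h)" using nrm_nonneg[OF assms(1)] by simp
  fix x assume x: "x \<in> E"
  have "av ((g + h) x) \<le> max (av (g x)) (av (h x))" using va_add[OF av] by simp
  also have "\<dots> \<le> max (nrm g * N x) (nrm h * N x)" using nrm_bound assms x by (meson max.mono)
  also have "\<dots> = max (nrm g) (nrm h) * N x" using N_nonneg[OF x] by (simp add: max_mult_distrib_right)
  finally show "av ((g + h) x) \<le> max (nrm g) (nrm h) * N x" .
qed

lemma dual_eqI: "g \<in> dual sc X \<Longrightarrow> h \<in> dual sc X \<Longrightarrow> (\<And>x. x \<in> X \<Longrightarrow> g x = h x) \<Longrightarrow> g = h"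
  apply (rule ext) subgoal for x by (cases "x \<in> X") (auto simp: dual_def) done

lemma nrm_zero_iff: assumes "g \<in> dual sc E" shows "nrm g = 0 \<longleftrightarrow> g = 0"
proof
  assume "nrm g = 0"
  then have "av (g x) \<le> 0" if "x \<in> E" for x using nrm_bound[OF assms that] by simp
  then have "g x = 0" if "x \<in> E" for x using that by (meson av_simps(5,6) order_antisym)
  then show "g = 0" using dual_eqI[OF assms dual_zero] by auto
next
  assume "g = 0"
  then show "nrm g = 0" using nrm_nonneg[OF assms] nrm_least[OF assms, of 0] by auto
qed

lemma nrm_pos: "g \<in> dual sc E \<Longrightarrow> g \<noteq> 0 \<Longrightarrow> 0 < nrm g"
  using nrm_nonneg nrm_zero_iff by force

lemma nrm_uminus: "g \<in> dual sc E \<Longrightarrow> nrm (- g) = nrm g"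
proof -
  assume g: "g \<in> dual sc E"
  have "- g = dscale (-1) g" unfolding dscale_def by (simp add: fun_eq_iff)
  then show ?thesis using nrm_dscale[OF g, of "-1"] by simp
qed

lemma dual_uminus': "g \<in> dual sc X \<Longrightarrow> - g \<in> dual sc X"
  using dual_minus[OF dual_zero] by (metis diff_0)

lemma nrm_diff: assumes "g \<in> dual sc E" "h \<in> dual sc E" shows "nrm (g - h) \<le> max (nrm g) (nrm h)"
  using nrm_add[OF assms(1) dual_uminus'[OF assms(2)]] nrm_uminus[OF assms(2)] by simp

lemma nrm_strict: assumes "g \<in> dual sc E" "h \<in> dual sc E" "nrm h < nrm g" shows "nrm (g + h) = nrm g"
proof -
  have "nrm (g + h) \<le> nrm g" using nrm_add[OF assms(1,2)] assms(3) by simp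
  moreover have "nrm g \<le> max (nrm (g + h)) (nrm h)"
    using nrm_diff[OF dual_plus[OF assms(1,2)] assms(2)] by simp
  ultimately show ?thesis using assms(3) by linarith
qed

lemma nrm_max_eq: assumes "g \<in> dual sc E" "h \<in> dual sc E" "nrm g \<noteq> nrm h"
  shows "nrm (g + h) = max (nrm g) (nrm h)"
proof (cases "nrm h < nrm g")
  case True then show ?thesis using nrm_strict[OF assms(1,2)] by simp
next
  case False
  then have "nrm g < nrm h" using assms(3) by simp
  then show ?thesis using nrm_strict[OF assms(2,1)] by (simp add: add.commute)
qed

definition restr :: "'e set \<Rightarrow> ('e \<Rightarrow> 'a) \<Rightarrow> ('e \<Rightarrow> 'a)" where
  "restr Y g = (\<lambda>x. if x \<in> Y then g x else 0)"

lemma restr_dual: "Y \<subseteq> X \<Longrightarrow> subspace Y \<Longrightarrow> g \<in> dual sc X \<Longrightarrow> restr Y g \<in> dual sc Y"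
proof -
  assume a: "Y \<subseteq> X" "subspace Y" "g \<in> dual sc X"
  show ?thesis unfolding dual_def restr_def
  proof (intro CollectI conjI ballI allI impI)
    fix x y assume "x \<in> Y" "y \<in> Y"
    moreover have "x \<in> X" "y \<in> X" using a(1) \<open>x \<in> Y\<close> \<open>y \<in> Y\<close> by auto
    ultimately show "(if x + y \<in> Y then g (x + y) else 0) = (if x \<in> Y then g x else 0) + (if y \<in> Y then g y else 0)"
      using subspace_add[OF a(2)] dual_add[OF a(3)] by simp
  next
    fix c x assume "x \<in> Y"
    then show "(if sc c x \<in> Y then g (sc c x) else 0) = c * (if x \<in> Y then g x else 0)"
      using a subspace_scale[OF a(2)] dual_scale[OF a(3)] by auto
  qed auto
qed

lemma opnorm_restr_le:
  assumes "subspace Y" "subspace X" "Y \<subseteq> X" "X \<subseteq> E" "g \<in> dual sc X"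
  shows "opnorm av Y N (restr Y g) \<le> opnorm av X N g"
proof -
  have Y: "Y \<subseteq> E" using assms by auto
  show ?thesis
    by (rule opnorm_props(3)[OF assms(1) Y restr_dual[OF assms(3,1,5)]])
       (use opnorm_props(1,2)[OF assms(2,4,5)] assms(3) in \<open>auto simp: restr_def\<close>)
qed

lemma opnorm_ext_ge:
  assumes "subspace Y" "subspace X" "Y \<subseteq> X" "X \<subseteq> E" "g \<in> dual sc X" "f \<in> dual sc Y"
    "\<And>x. x \<in> Y \<Longrightarrow> g x = f x"
  shows "opnorm av Y N f \<le> opnorm av X N g"
proof -
  have "restr Y g = f" using assms(6,7) unfolding restr_def dual_def by (auto simp: fun_eq_iff)
  then show ?thesis using opnorm_restr_le[OF assms(1-5)] by simp
qed

end

context NA begin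

lemma dual_lin2: "h \<in> dual sc X \<Longrightarrow> subspace X \<Longrightarrow> x \<in> X \<Longrightarrow> y \<in> X \<Longrightarrow>
   h (sc a x - sc b y) = a * h x - b * h y"
  using dual_diff[of X h "sc a x" "sc b y"] subspace_scale[of X] dual_scale[of h X] by simp

lemma dual_lin2p: "h \<in> dual sc X \<Longrightarrow> subspace X \<Longrightarrow> x \<in> X \<Longrightarrow> y \<in> X \<Longrightarrow>
   h (sc a x + sc b y) = a * h x + b * h y"
  using dual_add[of h X "sc a x" "sc b y"] subspace_scale[of X] dual_scale[of h X] by simp

lemma dv_span_two: "dv.span {u, w} = {dscale a u + dscale b w | a b. True}"
proof -
  have "dv.span {u, w} = {x. \<exists>k. x - dscale k u \<in> dv.span {w}}" using dv.span_insert by simp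
  also have "\<dots> = {x. \<exists>k. x - dscale k u \<in> range (\<lambda>k. dscale k w)}" using dv.span_singleton by simp
  also have "\<dots> = {dscale a u + dscale b w | a b. True}"
  proof (rule set_eqI, rule iffI)
    fix x assume "x \<in> {x. \<exists>k. x - dscale k u \<in> range (\<lambda>k. dscale k w)}"
    then obtain k c where "x - dscale k u = dscale c w" by auto
    then have "x = dscale k u + dscale c w" by (simp add: algebra_simps)
    then show "x \<in> {dscale a u + dscale b w | a b. True}" by blast
  next
    fix x assume "x \<in> {dscale a u + dscale b w | a b. True}"
    then obtain a c where "x = dscale a u + dscale c w" by blast
    then have "x - dscale a u = dscale c w" by simp
    then show "x \<in> {x. \<exists>k. x - dscale k u \<in> range (\<lambda>k. dscale k w)}" by auto
  qed
  finally show ?thesis .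
qed

lemma two_dim_setup:
  assumes Fs: "dv.subspace F" and FE: "F \<subseteq> dual sc E" and d2: "dv.dim F = 2"
  obtains g1 g2 a1 a2 where "g1 \<in> dual sc E" "g2 \<in> dual sc E" "a1 \<in> E" "a2 \<in> E"
    "g1 a1 = 1" "g1 a2 = 0" "g2 a1 = 0" "g2 a2 = 1"
    "F = {dscale a g1 + dscale b g2 | a b. True}"
proof -
  obtain B where B: "B \<subseteq> F" "dv.independent B" "F \<subseteq> dv.span B" "card B = dv.dim F"
    using dv.basis_exists by blast
  then obtain h1 h2 where h: "B = {h1, h2}" "h1 \<noteq> h2" using d2 card_2_iff by metis
  have spanB: "dv.span B = F" using dv.span_minimal[OF B(1) Fs] B(3) by auto
  have hE: "h1 \<in> dual sc E" "h2 \<in> dual sc E" using B(1) FE h by auto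
  have h1nz: "h1 \<noteq> 0" using dv.dependent_zero B(2) h by auto
  have h2n: "h2 \<notin> dv.span {h1}"
  proof
    assume "h2 \<in> dv.span {h1}"
    moreover have "{h1, h2} - {h2} = {h1}" using h(2) by auto
    ultimately have "dv.dependent B" unfolding dv.dependent_def h by auto
    then show False using B(2) by simp
  qed
  obtain x1 where x1: "x1 \<in> E" "h1 x1 \<noteq> 0"
  proof (rule ccontr)
    assume "\<not> thesis"
    then have "\<forall>x\<in>E. h1 x = 0" using that by blast
    then have "h1 = 0" using dual_eqI[OF hE(1) dual_zero] by auto
    then show False using h1nz by simp
  qed
  obtain x2 where x2: "x2 \<in> E" "h1 x1 * h2 x2 - h1 x2 * h2 x1 \<noteq> 0"
  proof (rule ccontr)
    assume "\<not> thesis"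
    then have a: "\<forall>x\<in>E. h1 x1 * h2 x = h1 x * h2 x1" using that by force
    have "h2 = dscale (h2 x1 / h1 x1) h1"
    proof (rule dual_eqI[OF hE(2) dual_dscale[OF hE(1)]])
      fix x assume "x \<in> E"
      then show "h2 x = dscale (h2 x1 / h1 x1) h1 x" using a x1(2) by (simp add: field_simps)
    qed
    then have "h2 \<in> dv.span {h1}" using dv.span_singleton by auto
    then show False using h2n by simp
  qed
  define det where "det = h1 x1 * h2 x2 - h1 x2 * h2 x1"
  have det: "det \<noteq> 0" using x2 det_def by simp
  define a1 where "a1 = sc (h2 x2 / det) x1 - sc (h2 x1 / det) x2"
  define a2 where "a2 = sc (h1 x1 / det) x2 - sc (h1 x2 / det) x1"
  have a1E: "a1 \<in> E" unfolding a1_def using x1 x2 E_diff E_scale by auto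
  have a2E: "a2 \<in> E" unfolding a2_def using x1 x2 E_diff E_scale by auto
  have e1: "h1 a1 = 1"
  proof -
    have "h1 a1 = (h2 x2 / det) * h1 x1 - (h2 x1 / det) * h1 x2" unfolding a1_def
      by (rule dual_lin2[OF hE(1) E_sub x1(1) x2(1)])
    also have "\<dots> = (h1 x1 * (h2 x2 / det) - h1 x2 * (h2 x1 / det))" by (simp add: mult.commute)
    also have "\<dots> = (h1 x1 * h2 x2 - h1 x2 * h2 x1) / det" by (simp add: diff_divide_distrib)
    finally show ?thesis using det unfolding det_def by (simp add: algebra_simps)
  qed
  have e2: "h2 a1 = 0"
  proof -
    have "h2 a1 = (h2 x2 / det) * h2 x1 - (h2 x1 / det) * h2 x2" unfolding a1_def
      by (rule dual_lin2[OF hE(2) E_sub x1(1) x2(1)])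
    also have "\<dots> = (h2 x1 * (h2 x2 / det) - h2 x2 * (h2 x1 / det))" by (simp add: mult.commute)
    also have "\<dots> = (h2 x1 * h2 x2 - h2 x2 * h2 x1) / det" by (simp add: diff_divide_distrib)
    finally show ?thesis using det unfolding det_def by (simp add: algebra_simps)
  qed
  have e3: "h1 a2 = 0"
  proof -
    have "h1 a2 = (h1 x1 / det) * h1 x2 - (h1 x2 / det) * h1 x1" unfolding a2_def
      by (rule dual_lin2[OF hE(1) E_sub x2(1) x1(1)])
    also have "\<dots> = (h1 x2 * (h1 x1 / det) - h1 x1 * (h1 x2 / det))" by (simp add: mult.commute)
    also have "\<dots> = (h1 x2 * h1 x1 - h1 x1 * h1 x2) / det" by (simp add: diff_divide_distrib)
    finally show ?thesis using det unfolding det_def by (simp add: algebra_simps)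
  qed
  have e4: "h2 a2 = 1"
  proof -
    have "h2 a2 = (h1 x1 / det) * h2 x2 - (h1 x2 / det) * h2 x1" unfolding a2_def
      by (rule dual_lin2[OF hE(2) E_sub x2(1) x1(1)])
    also have "\<dots> = (h2 x2 * (h1 x1 / det) - h2 x1 * (h1 x2 / det))" by (simp add: mult.commute)
    also have "\<dots> = (h2 x2 * h1 x1 - h2 x1 * h1 x2) / det" by (simp add: diff_divide_distrib)
    finally show ?thesis using det unfolding det_def by (simp add: algebra_simps)
  qed
  have "F = {dscale a h1 + dscale b h2 | a b. True}" using spanB h dv_span_two by simp
  then show ?thesis using that hE a1E a2E e1 e2 e3 e4 by blast
qed

lemma hyperplane_exists:
  assumes D: "subspace D" "D \<subseteq> E" "D \<noteq> E"
  obtains H b where "subspace H" "D \<subseteq> H" "H \<subseteq> E" "dim H + 1 = dim E" "b \<in> E" "b \<notin> H"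
    "\<And>x. x \<in> E \<Longrightarrow> \<exists>k. x - sc k b \<in> H"
proof -
  obtain BD where BD: "finite BD" "BD \<subseteq> D" "independent BD" "span BD = D"
    using finite_span_of_subspace[OF D(1,2)] by blast
  obtain B where B: "BD \<subseteq> B" "B \<subseteq> E" "independent B" "E \<subseteq> span B"
    using maximal_independent_subset_extend[of BD E] BD D by blast
  obtain B0 where B0: "finite B0" "B0 \<subseteq> E" "span B0 = E" using E_basis by blast
  have finB: "finite B" using independent_span_bound[OF B0(1) B(3)] B(2) B0(3) by auto
  have spanB: "span B = E" using B span_minimal[OF B(2) E_sub] by auto
  have cardB: "card B = dim E" using basis_card_eq_dim[OF B(2,4,3)] .
  obtain b where b: "b \<in> B" "b \<notin> BD"
  proof (rule ccontr)
    assume "\<not> thesis"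
    then have "B \<subseteq> BD" using that by blast
    then have "E \<subseteq> D" using spanB BD(4) span_mono by blast
    then show False using D by blast
  qed
  define H where "H = span (B - {b})"
  have Hs: "subspace H" unfolding H_def by simp
  have DH: "D \<subseteq> H" unfolding H_def using BD(4) span_mono[of BD "B - {b}"] B(1) b by blast
  have HE: "H \<subseteq> E" unfolding H_def using span_E B(2) by blast
  have "independent (B - {b})" using independent_mono[OF B(3)] by blast
  then have "dim H = card (B - {b})" unfolding H_def using dim_span_eq_card_independent by blast
  moreover have "card B > 0" using finB b(1) card_gt_0_iff by blast
  ultimately have dimH: "dim H + 1 = dim E" using cardB finB b(1) by (simp add: card_Diff_singleton)
  have bE: "b \<in> E" using B(2) b by blast
  have bH: "b \<notin> H" unfolding H_def using B(3) b(1) dependent_def by blast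
  have "\<exists>k. x - sc k b \<in> H" if "x \<in> E" for x
  proof -
    have "insert b (B - {b}) = B" using b by blast
    then have "x \<in> span (insert b (B - {b}))" using spanB that by simp
    then show ?thesis unfolding H_def using span_breakdown_eq by blast
  qed
  then show ?thesis using that Hs DH HE dimH bE bH by blast
qed

end

lemma dscale_zero[simp]: "dscale 0 g = 0" by (simp add: dscale_def fun_eq_iff)
lemma dscale_one[simp]: "dscale 1 g = g" by (simp add: dscale_def fun_eq_iff)
lemma dscale_zero_right[simp]: "dscale c 0 = 0" by (simp add: dscale_def fun_eq_iff)

context NA begin
lemma nrm_zero[simp]: "nrm 0 = 0" using nrm_zero_iff[OF dual_zero] by simp
end

locale NA2 = NA +
  fixes g1 g2 and a1 a2
  assumes g1: "g1 \<in> dual sc E" and g2: "g2 \<in> dual sc E" and a1: "a1 \<in> E" and a2: "a2 \<in> E"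
    and d11: "g1 a1 = 1" and d12: "g1 a2 = 0" and d21: "g2 a1 = 0" and d22: "g2 a2 = 1"
begin

definition FF :: "('b \<Rightarrow> 'a) set" where "FF = {dscale a g1 + dscale b g2 | a b. True}"
definition WW :: "'b set" where "WW = {x\<in>E. g1 x = 0 \<and> g2 x = 0}"
definition q :: "'b \<Rightarrow> real" where "q v = Inf {N (v + w) | w. w \<in> WW}"

lemma FF_memI: "dscale a g1 + dscale b g2 \<in> FF" unfolding FF_def by blast

lemma FF_dual: "g \<in> FF \<Longrightarrow> g \<in> dual sc E"
  unfolding FF_def using dual_plus dual_dscale g1 g2 by blast

lemma FF_coord: assumes "g \<in> FF" shows "g = dscale (g a1) g1 + dscale (g a2) g2"
proof -
  obtain a b where g: "g = dscale a g1 + dscale b g2" using assms FF_def by blast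
  then have "g a1 = a" "g a2 = b" using d11 d12 d21 d22 by simp_all
  then show ?thesis using g by simp
qed

lemma FF_subspace: "dv.subspace FF"
  unfolding dv.subspace_def
proof (intro conjI ballI allI)
  show "0 \<in> FF" using FF_memI[of 0 0] by simp
next
  fix x y assume "x \<in> FF" "y \<in> FF"
  then obtain a b c d where "x = dscale a g1 + dscale b g2" "y = dscale c g1 + dscale d g2" using FF_def by blast
  then have "x + y = dscale (a + c) g1 + dscale (b + d) g2" by (simp add: fun_eq_iff algebra_simps)
  then show "x + y \<in> FF" using FF_memI by simp
next
  fix c x assume "x \<in> FF"
  then obtain a b where "x = dscale a g1 + dscale b g2" using FF_def by blast
  then have "dscale c x = dscale (c * a) g1 + dscale (c * b) g2" by (simp add: fun_eq_iff algebra_simps)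
  then show "dscale c x \<in> FF" using FF_memI by simp
qed

lemma FF_add: "g \<in> FF \<Longrightarrow> h \<in> FF \<Longrightarrow> g + h \<in> FF"
  using FF_subspace dv.subspace_add by blast
lemma FF_scale: "g \<in> FF \<Longrightarrow> dscale c g \<in> FF"
  using FF_subspace dv.subspace_scale by blast
lemma FF_diff: "g \<in> FF \<Longrightarrow> h \<in> FF \<Longrightarrow> g - h \<in> FF"
  using FF_subspace dv.subspace_diff by blast
lemma g1F: "g1 \<in> FF" using FF_memI[of 1 0] by simp
lemma g2F: "g2 \<in> FF" using FF_memI[of 0 1] by simp

lemma FF_eq_zero: "g \<in> FF \<Longrightarrow> g a1 = 0 \<Longrightarrow> g a2 = 0 \<Longrightarrow> g = 0"
  using FF_coord[of g] by (simp add: dscale_def fun_eq_iff)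

lemma g1_ne_g2: "g1 \<noteq> g2" using d11 d21 by auto
lemma g1_nz: "g1 \<noteq> 0" using d11 by auto
lemma g2_nz: "g2 \<noteq> 0" using d22 by auto

lemma FF_span: "dv.span {g1, g2} = FF" using dv_span_two FF_def by simp

lemma FF_indep: "dv.independent {g1, g2}"
proof
  assume "dv.dependent {g1, g2}"
  then obtain a where a: "a \<in> {g1, g2}" "a \<in> dv.span ({g1, g2} - {a})" unfolding dv.dependent_def by blast
  then consider "a = g1" "g1 \<in> dv.span {g2}" | "a = g2" "g2 \<in> dv.span {g1}"
    using g1_ne_g2 by (auto simp: insert_Diff_if)
  then show False
  proof cases
    case 1
    then obtain k where "g1 = dscale k g2" using dv.span_singleton by auto
    then show False using d11 d21 by (metis dscale_apply mult_zero_right zero_neq_one)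
  next
    case 2
    then obtain k where "g2 = dscale k g1" using dv.span_singleton by auto
    then show False using d12 d22 by (metis dscale_apply mult_zero_right zero_neq_one)
  qed
qed

lemma FF_dim: "dv.dim FF = 2"
  using dv.dim_span_eq_card_independent[OF FF_indep] FF_span g1_ne_g2 by simp

lemma WW_sub: "WW \<subseteq> E" unfolding WW_def by auto

lemma WW_subspace: "subspace WW"
  unfolding subspace_def WW_def
  using E_0 E_add E_scale dual_0[OF E_sub g1] dual_0[OF E_sub g2] dual_add[OF g1] dual_add[OF g2]
    dual_scale[OF g1] dual_scale[OF g2] by auto

lemma FF_vanish: "g \<in> FF \<Longrightarrow> w \<in> WW \<Longrightarrow> g w = 0"
  using FF_coord[of g] WW_def by (metis (mono_tags, lifting) add.right_neutral dscale_apply mem_Collect_eq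
      mult_zero_right plus_fun_apply)

lemma decomp: "x \<in> E \<Longrightarrow> x - sc (g1 x) a1 - sc (g2 x) a2 \<in> WW"
proof -
  assume x: "x \<in> E"
  have e: "x - sc (g1 x) a1 - sc (g2 x) a2 \<in> E" using x a1 a2 E_diff E_scale by auto
  have "g1 (x - sc (g1 x) a1 - sc (g2 x) a2) = g1 x - g1 x * g1 a1 - g2 x * g1 a2"
    using dual_diff[OF E_sub g1] dual_scale[OF g1] x a1 a2 E_diff E_scale by simp
  moreover have "g2 (x - sc (g1 x) a1 - sc (g2 x) a2) = g2 x - g1 x * g2 a1 - g2 x * g2 a2"
    using dual_diff[OF E_sub g2] dual_scale[OF g2] x a1 a2 E_diff E_scale by simp
  ultimately show ?thesis using e d11 d12 d21 d22 WW_def by simp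
qed

lemma perp_in_FF:
  assumes h: "h \<in> dual sc E" and v: "\<And>w. w \<in> WW \<Longrightarrow> h w = 0"
  shows "h \<in> FF"
proof -
  have "h = dscale (h a1) g1 + dscale (h a2) g2"
  proof (rule dual_eqI[OF h dual_plus[OF dual_dscale[OF g1] dual_dscale[OF g2]]])
    fix x assume x: "x \<in> E"
    have "h (x - sc (g1 x) a1 - sc (g2 x) a2) = 0" using v decomp x by blast
    moreover have "h (x - sc (g1 x) a1 - sc (g2 x) a2) = h x - g1 x * h a1 - g2 x * h a2"
      using dual_diff[OF E_sub h] dual_scale[OF h] x a1 a2 E_diff E_scale by simp
    ultimately show "h x = (dscale (h a1) g1 + dscale (h a2) g2) x" by (simp add: algebra_simps)
  qed
  then show ?thesis using FF_memI by metis
qed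

lemma q_set: "v \<in> E \<Longrightarrow> {N (v + w) | w. w \<in> WW} \<noteq> {} \<and> bdd_below {N (v + w) | w. w \<in> WW}"
  using subspace_0[OF WW_subspace] N_nonneg E_add WW_sub by (auto intro!: bdd_belowI[of _ 0])

lemma q1: "v \<in> E \<Longrightarrow> w \<in> WW \<Longrightarrow> q v \<le> N (v + w)"
  unfolding q_def using q_set by (auto intro!: cInf_lower)

lemma q2: assumes "v \<in> E" "e > 0" shows "\<exists>w\<in>WW. N (v + w) < q v + e"
proof (rule ccontr)
  assume "\<not> ?thesis"
  then have "q v + e \<le> q v" unfolding q_def using q_set[OF assms(1)]
    by (intro cInf_greatest) (auto simp: not_less)
  then show False using assms by simp
qed

lemma q_nonneg: "v \<in> E \<Longrightarrow> 0 \<le> q v"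
  unfolding q_def using q_set N_nonneg E_add WW_sub by (intro cInf_greatest) auto

lemma q_lower: "v \<in> E \<Longrightarrow> (\<And>w. w \<in> WW \<Longrightarrow> c \<le> N (v + w)) \<Longrightarrow> c \<le> q v"
  unfolding q_def using q_set by (intro cInf_greatest) auto

lemma q_pos: assumes "v \<in> E" "v \<notin> WW" shows "0 < q v"
proof -
  obtain c where c: "c > 0" "\<And>y. y \<in> WW \<Longrightarrow> c \<le> N (v - y)"
    using dist_pos[OF WW_subspace WW_sub assms] by blast
  have "c \<le> q v"
  proof (rule q_lower[OF assms(1)])
    fix w assume "w \<in> WW"
    then show "c \<le> N (v + w)" using c(2)[of "- w"] subspace_neg[OF WW_subspace] by simp
  qed
  then show ?thesis using c by simp
qed

lemma q_scale_le: assumes "v \<in> E" "w \<in> WW" shows "av c * q v \<le> N (sc c v + w)"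
proof (cases "c = 0")
  case True then show ?thesis using N_nonneg WW_sub assms by auto
next
  case False
  have w': "sc (inverse c) w \<in> WW" using subspace_scale[OF WW_subspace assms(2)] .
  have "sc c v + w = sc c (v + sc (inverse c) w)" using False by (simp add: scale_right_distrib)
  then have "N (sc c v + w) = av c * N (v + sc (inverse c) w)"
    using N_scale E_add assms(1) w' WW_sub by auto
  moreover have "q v \<le> N (v + sc (inverse c) w)" using q1[OF assms(1) w'] .
  ultimately show ?thesis by (simp add: mult_left_mono)
qed

lemma eval_bound: assumes "g \<in> FF" "v \<in> E" shows "av (g v) \<le> nrm g * q v"
proof (cases "g = 0")
  case True then show ?thesis by simp
next
  case False
  have gd: "g \<in> dual sc E" using FF_dual assms(1) .
  have np: "nrm g > 0" using nrm_pos[OF gd False] .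
  have "av (g v) / nrm g \<le> q v"
  proof (rule q_lower[OF assms(2)])
    fix w assume w: "w \<in> WW"
    have "g (v + w) = g v" using dual_add[OF gd assms(2)] w WW_sub FF_vanish[OF assms(1) w] by auto
    then have "av (g v) \<le> nrm g * N (v + w)" using nrm_bound[OF gd] E_add assms(2) w WW_sub by force
    then show "av (g v) / nrm g \<le> N (v + w)" using np by (simp add: divide_le_eq mult.commute)
  qed
  then show ?thesis using np by (simp add: divide_le_eq mult.commute)
qed

end

context NA2 begin

lemma FF_apply_E: "g \<in> FF \<Longrightarrow> x \<in> E \<Longrightarrow> y \<in> E \<Longrightarrow> g (sc a x + sc b y) = a * g x + b * g y"
  using dual_lin2p[OF FF_dual E_sub] by blast

lemma polarity:
  assumes v: "v \<in> E" "v \<notin> WW" and t: "0 < t" "t < 1"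
  shows "\<exists>g\<in>FF. g \<noteq> 0 \<and> t * q v * nrm g \<le> av (g v)"
proof -
  have nz: "g1 v \<noteq> 0 \<or> g2 v \<noteq> 0" using v WW_def by auto
  define g0 where "g0 = dscale (g2 v) g1 - dscale (g1 v) g2"
  have g0F: "g0 \<in> FF" unfolding g0_def using FF_diff FF_scale g1F g2F by blast
  have g0d: "g0 \<in> dual sc E" using FF_dual g0F by blast
  have g0v: "g0 v = 0" by (simp add: g0_def algebra_simps)
  obtain u where u: "u \<in> E" "g0 u \<noteq> 0"
  proof (cases "g2 v = 0")
    case True
    then have "g0 a2 \<noteq> 0" using nz d12 d22 by (simp add: g0_def)
    then show ?thesis using that a2 by blast
  next
    case False
    then have "g0 a1 \<noteq> 0" using d11 d21 by (simp add: g0_def)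
    then show ?thesis using that a1 by blast
  qed
  define X where "X = {w + sc k v | w k. w \<in> WW}"
  have XE: "X \<subseteq> E" unfolding X_def using WW_sub E_add E_scale v(1) by blast
  have Xs: "subspace X"
    unfolding subspace_def
  proof (intro conjI ballI allI)
    show "0 \<in> X" unfolding X_def using subspace_0[OF WW_subspace] by (auto intro!: exI[of _ 0])
  next
    fix x y assume "x \<in> X" "y \<in> X"
    then obtain w k w' k' where "x = w + sc k v" "y = w' + sc k' v" "w \<in> WW" "w' \<in> WW" unfolding X_def by blast
    then have "x + y = (w + w') + sc (k + k') v" "w + w' \<in> WW"
      using subspace_add[OF WW_subspace] by (auto simp: scale_left_distrib)
    then show "x + y \<in> X" unfolding X_def by blast
  next
    fix c x assume "x \<in> X"
    then obtain w k where "x = w + sc k v" "w \<in> WW" unfolding X_def by blast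
    then have "sc c x = sc c w + sc (c * k) v" "sc c w \<in> WW"
      using subspace_scale[OF WW_subspace] by (auto simp: scale_right_distrib)
    then show "sc c x \<in> X" unfolding X_def by blast
  qed
  have g0X: "g0 y = 0" if yX: "y \<in> X" for y
  proof -
    obtain w k where "y = w + sc k v" "w \<in> WW" using yX unfolding X_def by blast
    then show ?thesis using dual_add[OF g0d] dual_scale[OF g0d] WW_sub E_scale v(1) g0v
        FF_vanish[OF g0F] by auto
  qed
  have uX: "u \<notin> X" using g0X u by blast
  obtain c where c: "c > 0" "\<And>y. y \<in> X \<Longrightarrow> c \<le> N (u - y)" using dist_pos[OF Xs XE u(1) uX] by blast
  define \<delta> where "\<delta> = Inf {N (u - y) | y. y \<in> X}"
  have Sne: "{N (u - y) | y. y \<in> X} \<noteq> {}" using subspace_0[OF Xs] by blast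
  have \<delta>1: "\<delta> \<le> N (u - y)" if "y \<in> X" for y
    unfolding \<delta>_def by (rule cInf_lower) (use that c in \<open>auto intro!: bdd_belowI[of _ c]\<close>)
  have \<delta>c: "c \<le> \<delta>" unfolding \<delta>_def by (rule cInf_greatest[OF Sne]) (use c in auto)
  obtain y where y: "y \<in> X" "N (u - y) < \<delta> / t"
  proof (rule ccontr)
    assume "\<not> thesis"
    then have "\<forall>y\<in>X. \<delta> / t \<le> N (u - y)" using that by force
    then have "\<delta> / t \<le> \<delta>" unfolding \<delta>_def by (intro cInf_greatest[OF Sne]) auto
    then show False using \<delta>c c t by (simp add: divide_le_eq)
  qed
  define w where "w = u - y"
  have wE: "w \<in> E" unfolding w_def using u(1) y(1) XE E_diff by blast
  have tw: "t * N w < \<delta>" using y(2) t unfolding w_def by (simp add: field_simps)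
  define g where "g = dscale (g2 w) g1 - dscale (g1 w) g2"
  have gF: "g \<in> FF" unfolding g_def using FF_diff FF_scale g1F g2F by blast
  have gd: "g \<in> dual sc E" using FF_dual gF by blast
  have gw: "g w = 0" by (simp add: g_def algebra_simps)
  have g0w: "g0 w = g0 u" unfolding w_def using dual_diff[OF E_sub g0d u(1)] y(1) XE g0X by auto
  have gv: "g v = - g0 w" by (simp add: g_def g0_def algebra_simps)
  have gv0: "g v \<noteq> 0" using gv g0w u by simp
  then have gnz: "g \<noteq> 0" by auto
  have wW: "g1 w \<noteq> 0 \<or> g2 w \<noteq> 0"
  proof (rule ccontr)
    assume "\<not> ?thesis"
    then have "w \<in> WW" using wE WW_def by auto
    then show False using FF_vanish[OF g0F] g0w u by auto
  qed
  have qv: "0 < q v" using q_pos[OF v] .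
  have key: "t * q v * av (g x) \<le> av (g v) * N x" if x: "x \<in> E" for x
  proof -
    define \<alpha> where "\<alpha> = g x / g v"
    define z where "z = x - sc \<alpha> v"
    have zE: "z \<in> E" unfolding z_def using x v(1) E_diff E_scale by blast
    have gz: "g z = 0" unfolding z_def using dual_diff[OF E_sub gd x] dual_scale[OF gd v(1)] E_scale v(1) gv0
      by (simp add: \<alpha>_def)
    have gz': "g2 w * g1 z = g1 w * g2 z" using gz by (simp add: g_def)
    obtain \<beta> where \<beta>: "z - sc \<beta> w \<in> WW"
    proof (cases "g1 w = 0")
      case False
      define \<beta> where "\<beta> = g1 z / g1 w"
      have "g1 (z - sc \<beta> w) = 0"
      proof -
        have "g1 (z - sc \<beta> w) = g1 z - \<beta> * g1 w"
          using dual_diff[OF E_sub g1 zE E_scale[OF wE]] dual_scale[OF g1 wE] by simp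
        then show ?thesis using False by (simp add: \<beta>_def field_simps)
      qed
      moreover have "g2 (z - sc \<beta> w) = 0"
      proof -
        have "g2 (z - sc \<beta> w) = g2 z - \<beta> * g2 w"
          using dual_diff[OF E_sub g2 zE E_scale[OF wE]] dual_scale[OF g2 wE] by simp
        then show ?thesis using False gz' by (simp add: \<beta>_def field_simps)
      qed
      ultimately show ?thesis using that[of \<beta>] zE wE E_diff E_scale WW_def by auto
    next
      case True
      then have F: "g2 w \<noteq> 0" using wW by simp
      define \<beta> where "\<beta> = g2 z / g2 w"
      have "g2 (z - sc \<beta> w) = 0"
      proof -
        have "g2 (z - sc \<beta> w) = g2 z - \<beta> * g2 w"
          using dual_diff[OF E_sub g2 zE E_scale[OF wE]] dual_scale[OF g2 wE] by simp
        then show ?thesis using F by (simp add: \<beta>_def field_simps)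
      qed
      moreover have "g1 (z - sc \<beta> w) = 0"
      proof -
        have "g1 (z - sc \<beta> w) = g1 z - \<beta> * g1 w"
          using dual_diff[OF E_sub g1 zE E_scale[OF wE]] dual_scale[OF g1 wE] by simp
        then show ?thesis using F gz' True by (simp add: \<beta>_def field_simps)
      qed
      ultimately show ?thesis using that[of \<beta>] zE wE E_diff E_scale WW_def by auto
    qed
    define w0 where "w0 = z - sc \<beta> w"
    define A where "A = sc \<alpha> v + w0"
    have w0W: "w0 \<in> WW" using \<beta> w0_def by simp
    have AE: "A \<in> E" unfolding A_def using w0W WW_sub E_add E_scale v(1) by blast
    have AX: "A \<in> X" unfolding A_def X_def using w0W by (auto simp: add.commute)
    have xA: "x = A + sc \<beta> w" unfolding A_def w0_def z_def by simp
    have NA: "av \<alpha> * q v \<le> N A" unfolding A_def using q_scale_le[OF v(1) w0W] .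
    have Nx: "av \<beta> * \<delta> \<le> N x"
    proof (cases "\<beta> = 0")
      case True then show ?thesis using N_nonneg x by simp
    next
      case False
      define y' where "y' = y - sc (inverse \<beta>) A"
      have y'X: "y' \<in> X" unfolding y'_def using subspace_diff[OF Xs y(1) subspace_scale[OF Xs AX]] .
      have "x = sc \<beta> (u - y')" unfolding xA y'_def w_def using False
        by (simp add: scale_right_diff_distrib algebra_simps)
      then have "N x = av \<beta> * N (u - y')" using N_scale u(1) y'X XE E_diff by auto
      then show ?thesis using \<delta>1[OF y'X] by (simp add: mult_left_mono)
    qed
    have "t * (av \<alpha> * q v) \<le> N x"
    proof (cases "av \<beta> * N w < N A")
      case True
      have "N (sc \<beta> w) < N A" using True N_scale wE by simp
      then have "N x = N A" unfolding xA using N_strict AE E_scale wE by blast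
      moreover have "t * (av \<alpha> * q v) \<le> av \<alpha> * q v"
        using t qv mult_right_mono[of t 1 "av \<alpha> * q v"] by simp
      ultimately show ?thesis using NA by linarith
    next
      case False
      have "t * (av \<alpha> * q v) \<le> t * N A" using NA t by simp
      also have "\<dots> \<le> t * (av \<beta> * N w)" using False t by simp
      also have "\<dots> = av \<beta> * (t * N w)" by simp
      also have "\<dots> \<le> av \<beta> * \<delta>" using tw by (simp add: mult_left_mono)
      finally show ?thesis using Nx by linarith
    qed
    moreover have "g x = \<alpha> * g v" unfolding \<alpha>_def using gv0 by simp
    then have "av (g x) = av \<alpha> * av (g v)" using av_mult by simp
    ultimately show ?thesis using va_nonneg[OF av, of "g v"]
      by (smt (verit, ccfv_SIG) mult.commute mult.left_commute mult_left_mono)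
  qed
  have "nrm g \<le> av (g v) / (t * q v)"
  proof (rule nrm_least[OF gd])
    show "0 \<le> av (g v) / (t * q v)" using t qv by simp
    fix x assume "x \<in> E"
    then show "av (g x) \<le> av (g v) / (t * q v) * N x" using key[of x] t qv
      by (simp add: field_simps)
  qed
  then have "t * q v * nrm g \<le> av (g v)" using t qv by (simp add: field_simps)
  then show ?thesis using gF gnz by blast
qed

end

context NA2 begin

definition orthpair where
  "orthpair h1 h2 \<longleftrightarrow> h1 \<in> FF \<and> h2 \<in> FF \<and> h1 \<noteq> 0 \<and> h2 \<noteq> 0 \<and>
     (\<forall>\<alpha> \<beta>. nrm (dscale \<alpha> h1 + dscale \<beta> h2) = max (av \<alpha> * nrm h1) (av \<beta> * nrm h2))"

definition OP where "OP \<longleftrightarrow> (\<exists>h1 h2. orthpair h1 h2)"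

definition Ext where
  "Ext \<longleftrightarrow> (\<forall>v\<in>E. \<forall>c. c \<noteq> 0 \<and> q v = av c \<longrightarrow> (\<exists>g\<in>FF. g v = c \<and> nrm g \<le> 1))"

lemma FFd: "g \<in> FF \<Longrightarrow> g \<in> dual sc E" using FF_dual .

lemma orth_from_lower:
  assumes h: "h1 \<in> FF" "h2 \<in> FF" "h1 \<noteq> 0" "h2 \<noteq> 0"
    and low: "\<And>\<alpha> \<beta>. av \<alpha> * nrm h1 \<le> nrm (dscale \<alpha> h1 + dscale \<beta> h2)"
  shows "orthpair h1 h2"
  unfolding orthpair_def
proof (intro conjI allI h)
  fix \<alpha> \<beta>
  have d1: "dscale \<alpha> h1 \<in> dual sc E" "dscale \<beta> h2 \<in> dual sc E" using FFd h dual_dscale by auto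
  have le: "nrm (dscale \<alpha> h1 + dscale \<beta> h2) \<le> max (av \<alpha> * nrm h1) (av \<beta> * nrm h2)"
    using nrm_add[OF d1] nrm_dscale FFd h by simp
  show "nrm (dscale \<alpha> h1 + dscale \<beta> h2) = max (av \<alpha> * nrm h1) (av \<beta> * nrm h2)"
  proof (cases "av \<alpha> * nrm h1 < av \<beta> * nrm h2")
    case True
    then have "nrm (dscale \<alpha> h1) < nrm (dscale \<beta> h2)" using nrm_dscale FFd h by simp
    then have "nrm (dscale \<beta> h2 + dscale \<alpha> h1) = nrm (dscale \<beta> h2)" using nrm_strict d1 by blast
    then show ?thesis using True nrm_dscale FFd h by (simp add: add.commute)
  next
    case False
    then show ?thesis using le low[of \<alpha> \<beta>] by simp
  qed
qed

lemma orthpair_ne: "orthpair a b \<Longrightarrow> a \<noteq> b"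
proof
  assume o: "orthpair a b" and ab: "a = b"
  have "nrm (dscale 1 a + dscale (-1) b) = max (av 1 * nrm a) (av (-1) * nrm b)" using o unfolding orthpair_def by blast
  moreover have "dscale 1 a + dscale (-1) b = 0" using ab by (simp add: dscale_def fun_eq_iff)
  ultimately have "nrm a = 0" using ab by simp
  then show False using o nrm_zero_iff FFd unfolding orthpair_def by blast
qed

lemma orthpair_indep: assumes "orthpair a b" shows "dv.independent {a, b}"
proof
  assume "dv.dependent {a, b}"
  then obtain x where x: "x \<in> {a, b}" "x \<in> dv.span ({a, b} - {x})" unfolding dv.dependent_def by blast
  have ab: "a \<noteq> b" using orthpair_ne assms by blast
  have na: "nrm a > 0" "nrm b > 0" using assms nrm_pos FFd unfolding orthpair_def by auto
  from x ab consider "x = a" "a \<in> dv.span {b}" | "x = b" "b \<in> dv.span {a}" by (auto simp: insert_Diff_if)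
  then show False
  proof cases
    case 1
    then obtain k where k: "a = dscale k b" using dv.span_singleton by auto
    have e0: "dscale 1 a + dscale (- k) b = 0" using k by (simp add: dscale_def fun_eq_iff)
    have "nrm (dscale 1 a + dscale (- k) b) = max (av 1 * nrm a) (av (- k) * nrm b)"
      using assms unfolding orthpair_def by blast
    then have "max (nrm a) (av k * nrm b) = 0" using e0 by simp
    then show False using na by linarith
  next
    case 2
    then obtain k where k: "b = dscale k a" using dv.span_singleton by auto
    have e0: "dscale (- k) a + dscale 1 b = 0" using k by (simp add: dscale_def fun_eq_iff)
    have "nrm (dscale (- k) a + dscale 1 b) = max (av (- k) * nrm a) (av 1 * nrm b)"
      using assms unfolding orthpair_def by blast
    then have "max (av k * nrm a) (nrm b) = 0" using e0 by simp
    then show False using na by linarith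
  qed
qed

lemma FF_span_pair:
  assumes "a \<in> FF" "b \<in> FF" "dv.independent {a, b}" "a \<noteq> b" "g \<in> FF"
  shows "\<exists>\<alpha> \<beta>. g = dscale \<alpha> a + dscale \<beta> b"
proof (rule ccontr)
  assume nex: "\<not> ?thesis"
  then have "g \<notin> dv.span {a, b}" using dv_span_two by blast
  then have ind: "dv.independent (insert g {a, b})" using dv.independent_insertI assms(3) by blast
  have "insert g {a, b} \<subseteq> dv.span {g1, g2}" using assms FF_span by auto
  then have "card (insert g {a, b}) \<le> card {g1, g2}" using dv.independent_span_bound[OF _ ind] by auto
  moreover have "g \<noteq> a" "g \<noteq> b"
  proof -
    show "g \<noteq> a" using nex by (metis add.right_neutral dscale_one dscale_zero)
    show "g \<noteq> b" using nex by (metis add.left_neutral dscale_one dscale_zero)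
  qed
  ultimately show False using assms(4) g1_ne_g2 by simp
qed

lemma ratio_le:
  assumes "\<And>t. 0 < t \<Longrightarrow> t < 1 \<Longrightarrow> t * x \<le> (y::real)" shows "x \<le> y"
  using field_le_mult_one_interval assms by blast

lemma q_WW: "v \<in> WW \<Longrightarrow> q v = 0"
proof -
  assume v: "v \<in> WW"
  have "q v \<le> N (v + - v)" using q1 v WW_sub subspace_neg[OF WW_subspace v] by blast
  then show ?thesis using q_nonneg v WW_sub by force
qed

lemma OP_Ext: assumes "orthpair h1 h2" shows Ext
  unfolding Ext_def
proof (intro ballI allI impI)
  fix v c assume v: "v \<in> E" and c: "c \<noteq> 0 \<and> q v = av c"
  have qv: "q v > 0" using c va_pos[OF av] by simp
  have vW: "v \<notin> WW" using q_WW qv by force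
  have h: "h1 \<in> FF" "h2 \<in> FF" "h1 \<noteq> 0" "h2 \<noteq> 0" using assms unfolding orthpair_def by auto
  have np: "nrm h1 > 0" "nrm h2 > 0" using h nrm_pos FFd by auto
  define M where "M = max (av (h1 v) / nrm h1) (av (h2 v) / nrm h2)"
  have "q v \<le> M"
  proof (rule ratio_le)
    fix t :: real assume t: "0 < t" "t < 1"
    obtain g where g: "g \<in> FF" "g \<noteq> 0" "t * q v * nrm g \<le> av (g v)" using polarity[OF v vW t] by blast
    obtain \<alpha> \<beta> where ab: "g = dscale \<alpha> h1 + dscale \<beta> h2"
      using FF_span_pair[OF h(1,2) orthpair_indep[OF assms] orthpair_ne[OF assms] g(1)] by blast
    have ng: "nrm g = max (av \<alpha> * nrm h1) (av \<beta> * nrm h2)" using assms ab unfolding orthpair_def by simp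
    have gp: "nrm g > 0" using nrm_pos FFd g by auto
    have "av (g v) \<le> max (av \<alpha> * av (h1 v)) (av \<beta> * av (h2 v))"
      using ab va_add[OF av, of "\<alpha> * h1 v" "\<beta> * h2 v"] by (simp add: av_mult)
    also have "\<dots> \<le> max (av \<alpha> * (M * nrm h1)) (av \<beta> * (M * nrm h2))"
    proof (rule max.mono; rule mult_left_mono)
      have "av (h1 v) / nrm h1 \<le> M" "av (h2 v) / nrm h2 \<le> M" unfolding M_def by simp_all
      then show "av (h1 v) \<le> M * nrm h1" "av (h2 v) \<le> M * nrm h2" using np by (simp_all add: divide_le_eq)
    qed auto
    also have "\<dots> = M * nrm g"
    proof -
      have M0: "0 \<le> M" unfolding M_def using np by (simp add: le_max_iff_disj)
      show ?thesis unfolding ng using M0 by (simp add: max_mult_distrib_left algebra_simps)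
    qed
    finally have "t * q v * nrm g \<le> M * nrm g" using g(3) by linarith
    then show "t * q v \<le> M" using gp by simp
  qed
  then obtain h where h': "h \<in> FF" "h \<noteq> 0" "q v \<le> av (h v) / nrm h"
    unfolding M_def using h by (cases "av (h1 v) / nrm h1 \<le> av (h2 v) / nrm h2") (auto simp: max_def)
  have hp: "nrm h > 0" using nrm_pos FFd h' by auto
  have hv: "h v \<noteq> 0"
  proof
    assume "h v = 0"
    then show False using h'(3) qv by simp
  qed
  define g where "g = dscale (c / h v) h"
  have gF: "g \<in> FF" unfolding g_def using FF_scale h' by blast
  have "g v = c" unfolding g_def using hv by simp
  moreover have "nrm g \<le> 1"
  proof -
    have "nrm g = av c / av (h v) * nrm h" unfolding g_def using nrm_dscale FFd h' by (simp add: va_divide[OF av])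
    also have "\<dots> = q v * nrm h / av (h v)" using c by simp
    also have "\<dots> \<le> 1" using h'(3) hp hv va_pos[OF av hv] by (simp add: field_simps)
    finally show ?thesis .
  qed
  ultimately show "\<exists>g\<in>FF. g v = c \<and> nrm g \<le> 1" using gF by blast
qed

lemma notOP_Ext:
  assumes nOP: "\<not> OP" and ext: Ext and v: "v \<in> E" "v \<notin> WW"
  shows "q v \<notin> value_group av"
proof
  assume "q v \<in> value_group av"
  then obtain c where c: "c \<noteq> 0" "q v = av c" unfolding value_group_def by auto
  obtain g where g: "g \<in> FF" "g v = c" "nrm g \<le> 1" using ext v c unfolding Ext_def by blast
  define h where "h = dscale (g2 v) g1 - dscale (g1 v) g2"
  have hF: "h \<in> FF" unfolding h_def using FF_diff FF_scale g1F g2F by blast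
  have hv: "h v = 0" by (simp add: h_def algebra_simps)
  have hnz: "h \<noteq> 0"
  proof
    assume "h = 0"
    then have "h a1 = 0" "h a2 = 0" by auto
    then have "g2 v = 0" "g1 v = 0" using d11 d12 d21 d22 by (simp_all add: h_def)
    then show False using v WW_def by auto
  qed
  have gnz: "g \<noteq> 0" using g c by auto
  have "orthpair g h"
  proof (rule orth_from_lower[OF g(1) hF gnz hnz])
    fix \<alpha> \<beta>
    have fF: "dscale \<alpha> g + dscale \<beta> h \<in> FF" using FF_add FF_scale g(1) hF by blast
    have "av \<alpha> * av c \<le> nrm (dscale \<alpha> g + dscale \<beta> h) * av c"
      using eval_bound[OF fF v(1)] g(2) hv c by (simp add: av_mult)
    then have "av \<alpha> \<le> nrm (dscale \<alpha> g + dscale \<beta> h)" using va_pos[OF av c(1)] by simp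
    moreover have "av \<alpha> * nrm g \<le> av \<alpha>" using g(3) mult_left_mono[of "nrm g" 1 "av \<alpha>"] by simp
    ultimately show "av \<alpha> * nrm g \<le> nrm (dscale \<alpha> g + dscale \<beta> h)" by linarith
  qed
  then show False using nOP OP_def by blast
qed

lemma notq_Ext: assumes "\<And>v. v \<in> E \<Longrightarrow> v \<notin> WW \<Longrightarrow> q v \<notin> value_group av" shows Ext
  unfolding Ext_def
proof (intro ballI allI impI)
  fix v c assume v: "v \<in> E" and c: "c \<noteq> 0 \<and> q v = av c"
  then have "q v \<in> value_group av" unfolding value_group_def by auto
  moreover have "v \<notin> WW" using q_WW c va_pos[OF av] by force
  ultimately show "\<exists>g\<in>FF. g v = c \<and> nrm g \<le> 1" using assms v by blast
qed

end

context NA2 begin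

abbreviation "orthF X \<equiv> na_orthogonal dscale FF nrm X"

lemma orthF_D: assumes "orthF X" "finite Y" "Y \<subseteq> X" "Y \<noteq> {}"
  shows "nrm (\<Sum>y\<in>Y. dscale (l y) y) = Max ((\<lambda>y. nrm (dscale (l y) y)) ` Y)"
proof -
  have "\<forall>Y l. finite Y \<and> Y \<subseteq> X \<and> Y \<noteq> {} \<longrightarrow>
        nrm (\<Sum>y\<in>Y. dscale (l y) y) = Max ((\<lambda>y. nrm (dscale (l y) y)) ` Y)"
    using assms(1) unfolding na_orthogonal_def by (rule conjunct2)
  then show ?thesis using assms(2-4) by blast
qed

lemma sum_two: "a \<noteq> b \<Longrightarrow> (\<Sum>y\<in>{a, b}. f y) = f a + f b" by simp

lemma orthF_pair: assumes o: "orthF X" and ab: "a \<in> X" "b \<in> X" "a \<noteq> b" shows "orthpair a b"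
proof -
  have X: "X \<subseteq> FF - {0}" using o unfolding na_orthogonal_def by blast
  have abF: "a \<in> FF" "b \<in> FF" "a \<noteq> 0" "b \<noteq> 0" using X ab by auto
  show ?thesis unfolding orthpair_def
  proof (intro conjI allI abF)
    fix \<alpha> \<beta> :: 'a
    define l where "l y = (if y = a then \<alpha> else \<beta>)" for y
    have "nrm (\<Sum>y\<in>{a, b}. dscale (l y) y) = Max ((\<lambda>y. nrm (dscale (l y) y)) ` {a, b})"
      by (rule orthF_D[OF o]) (use ab in auto)
    then show "nrm (dscale \<alpha> a + dscale \<beta> b) = max (av \<alpha> * nrm a) (av \<beta> * nrm b)"
      using ab(3) nrm_dscale FFd abF by (simp add: l_def)
  qed
qed

lemma subsets_two: "Y \<subseteq> {a, b} \<Longrightarrow> Y \<noteq> {} \<Longrightarrow> Y = {a} \<or> Y = {b} \<or> Y = {a, b}" by blast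

lemma orthpair_orthF: assumes o: "orthpair a b" shows "orthF {a, b}"
  unfolding na_orthogonal_def
proof (intro conjI allI impI)
  show "{a, b} \<subseteq> FF - {0}" using o unfolding orthpair_def by auto
  fix Y l assume Y: "finite Y \<and> Y \<subseteq> {a, b} \<and> Y \<noteq> {}"
  have ab: "a \<noteq> b" using orthpair_ne[OF o] .
  have F: "a \<in> FF" "b \<in> FF" using o unfolding orthpair_def by auto
  have e: "nrm (dscale (l a) a + dscale (l b) b) = max (av (l a) * nrm a) (av (l b) * nrm b)"
    using o unfolding orthpair_def by blast
  from subsets_two Y consider "Y = {a}" | "Y = {b}" | "Y = {a, b}" by blast
  then show "nrm (\<Sum>y\<in>Y. dscale (l y) y) = Max ((\<lambda>y. nrm (dscale (l y) y)) ` Y)"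
    by cases (use ab e F nrm_dscale FFd in auto)
qed

lemma single_orthF: "u \<in> FF \<Longrightarrow> u \<noteq> 0 \<Longrightarrow> orthF {u}"
  unfolding na_orthogonal_def
proof (intro conjI allI impI)
  fix Y l assume "u \<in> FF" "u \<noteq> 0" "finite Y \<and> Y \<subseteq> {u} \<and> Y \<noteq> {}"
  then have "Y = {u}" by blast
  then show "nrm (\<Sum>y\<in>Y. dscale (l y) y) = Max ((\<lambda>y. nrm (dscale (l y) y)) ` Y)" by simp
qed auto

lemma orthF_indep: assumes o: "orthF X" shows "dv.independent X"
proof
  assume "dv.dependent X"
  then obtain t u where t: "finite t" "t \<subseteq> X" "(\<Sum>v\<in>t. dscale (u v) v) = 0" "\<exists>v\<in>t. u v \<noteq> 0"
    unfolding dv.dependent_explicit by blast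
  obtain v where v: "v \<in> t" "u v \<noteq> 0" using t(4) by blast
  have X: "X \<subseteq> FF - {0}" using o unfolding na_orthogonal_def by blast
  have "nrm (\<Sum>y\<in>t. dscale (u y) y) = Max ((\<lambda>y. nrm (dscale (u y) y)) ` t)"
    by (rule orthF_D[OF o t(1,2)]) (use v in auto)
  then have "Max ((\<lambda>y. nrm (dscale (u y) y)) ` t) = 0" using t(3) by simp
  moreover have "nrm (dscale (u v) v) \<le> Max ((\<lambda>y. nrm (dscale (u y) y)) ` t)"
    using t(1) v by (intro Max_ge) auto
  moreover have "nrm (dscale (u v) v) > 0"
  proof -
    have "v \<in> FF" "v \<noteq> 0" using X t(2) v by auto
    then show ?thesis using nrm_dscale FFd nrm_pos v va_pos[OF av] by simp
  qed
  ultimately show False by linarith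
qed

lemma orthF_card: assumes o: "orthF X" shows "finite X \<and> card X \<le> 2"
proof -
  have "X \<subseteq> dv.span {g1, g2}" using o FF_span unfolding na_orthogonal_def by blast
  from dv.independent_span_bound[OF _ orthF_indep[OF o] this] have "finite X \<and> card X \<le> card {g1, g2}" by simp
  then show ?thesis using g1_ne_g2 by simp
qed

lemma notOP_orth_dim: assumes "\<not> OP" shows "orth_dim dscale FF nrm \<noteq> 2"
proof -
  have "max_orthogonal dscale FF nrm {g1}"
    unfolding max_orthogonal_def
  proof (intro conjI allI impI)
    show "orthF {g1}" using single_orthF g1F g1_nz by blast
    fix Y assume Y: "orthF Y \<and> {g1} \<subseteq> Y"
    show "Y = {g1}"
    proof (rule ccontr)
      assume "Y \<noteq> {g1}"
      then obtain y where "y \<in> Y" "y \<noteq> g1" using Y by blast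
      then have "orthpair g1 y" using orthF_pair Y by blast
      then show False using assms OP_def by blast
    qed
  qed
  then have m: "max_orthogonal dscale FF nrm (SOME X. max_orthogonal dscale FF nrm X)" by (rule someI)
  show ?thesis
  proof
    assume "orth_dim dscale FF nrm = 2"
    then have "card (SOME X. max_orthogonal dscale FF nrm X) = 2" unfolding orth_dim_def .
    then obtain a b where "(SOME X. max_orthogonal dscale FF nrm X) = {a, b}" "a \<noteq> b"
      using card_2_iff by metis
    then have "orthpair a b" using m orthF_pair unfolding max_orthogonal_def by auto
    then show False using assms OP_def by blast
  qed
qed

lemma factA: assumes o: "orthpair h1 h2" and u: "u \<in> FF" "u \<noteq> 0" shows "\<exists>w. orthpair u w"
proof -
  have h: "h1 \<in> FF" "h2 \<in> FF" "h1 \<noteq> 0" "h2 \<noteq> 0" using o unfolding orthpair_def by auto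
  obtain \<alpha> \<beta> where ab: "u = dscale \<alpha> h1 + dscale \<beta> h2"
    using FF_span_pair[OF h(1,2) orthpair_indep[OF o] orthpair_ne[OF o] u(1)] by blast
  have nu: "nrm u = max (av \<alpha> * nrm h1) (av \<beta> * nrm h2)" using o ab unfolding orthpair_def by simp
  show ?thesis
  proof (cases "av \<beta> * nrm h2 \<le> av \<alpha> * nrm h1")
    case True
    have "orthpair u h2"
    proof (rule orth_from_lower[OF u(1) h(2) u(2) h(4)])
      fix s m
      have "dscale s u + dscale m h2 = dscale (s * \<alpha>) h1 + dscale (s * \<beta> + m) h2"
        unfolding ab by (simp add: dscale_def fun_eq_iff algebra_simps)
      then have "nrm (dscale s u + dscale m h2) = max (av (s * \<alpha>) * nrm h1) (av (s * \<beta> + m) * nrm h2)"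
        using o unfolding orthpair_def by simp
      moreover have "av s * nrm u = av (s * \<alpha>) * nrm h1" using nu True by (simp add: av_mult)
      ultimately show "av s * nrm u \<le> nrm (dscale s u + dscale m h2)" by simp
    qed
    then show ?thesis by blast
  next
    case False
    have "orthpair u h1"
    proof (rule orth_from_lower[OF u(1) h(1) u(2) h(3)])
      fix s m
      have "dscale s u + dscale m h1 = dscale (s * \<alpha> + m) h1 + dscale (s * \<beta>) h2"
        unfolding ab by (simp add: dscale_def fun_eq_iff algebra_simps)
      then have "nrm (dscale s u + dscale m h1) = max (av (s * \<alpha> + m) * nrm h1) (av (s * \<beta>) * nrm h2)"
        using o unfolding orthpair_def by simp
      moreover have "av s * nrm u = av (s * \<beta>) * nrm h2" using nu False by (simp add: av_mult)
      ultimately show "av s * nrm u \<le> nrm (dscale s u + dscale m h1)" by simp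
    qed
    then show ?thesis by blast
  qed
qed

lemma OP_orth_dim: assumes o: "orthpair h1 h2" shows "orth_dim dscale FF nrm = 2"
proof -
  have h: "h1 \<in> FF" "h2 \<in> FF" "h1 \<noteq> 0" "h2 \<noteq> 0" using o unfolding orthpair_def by auto
  have "max_orthogonal dscale FF nrm {h1, h2}"
    unfolding max_orthogonal_def
  proof (intro conjI allI impI)
    show "orthF {h1, h2}" using orthpair_orthF[OF o] .
    fix Y assume Y: "orthF Y \<and> {h1, h2} \<subseteq> Y"
    have "finite Y \<and> card Y \<le> 2" using orthF_card Y by blast
    moreover have "card {h1, h2} = 2" using orthpair_ne[OF o] by simp
    ultimately show "Y = {h1, h2}" using Y by (metis card_seteq)
  qed
  then have m: "max_orthogonal dscale FF nrm (SOME X. max_orthogonal dscale FF nrm X)" by (rule someI)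
  define X where "X = (SOME X. max_orthogonal dscale FF nrm X)"
  have mX: "orthF X" "\<And>Y. orthF Y \<Longrightarrow> X \<subseteq> Y \<Longrightarrow> Y = X"
    using m unfolding X_def max_orthogonal_def by auto
  have cX: "finite X" "card X \<le> 2" using orthF_card mX(1) by auto
  have "card X = 2"
  proof (rule ccontr)
    assume "card X \<noteq> 2"
    then have "card X = 0 \<or> card X = 1" using cX by linarith
    then consider "X = {}" | u where "X = {u}" using cX card_1_singletonE by auto
    then show False
    proof cases
      case 1
      then have "{h1} = X" using mX(2)[of "{h1}"] single_orthF h by auto
      then show False using 1 by simp
    next
      case 2
      then have u: "u \<in> FF" "u \<noteq> 0" using mX(1) unfolding na_orthogonal_def by auto
      obtain w where w: "orthpair u w" using factA[OF o u] by blast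
      then have "{u, w} = X" using mX(2)[of "{u, w}"] orthpair_orthF 2 by auto
      then show False using 2 orthpair_ne[OF w] by auto
    qed
  qed
  then show ?thesis unfolding orth_dim_def X_def .
qed

end

locale NA3 = NA2 +
  fixes bv :: "'c::field \<Rightarrow> real" and \<iota> :: "'a \<Rightarrow> 'c"
  assumes bv: "nonarch_abs bv" and sphc: "spherically_complete bv" and imm: "immediate_extension av bv \<iota>"
begin

lemmas bv_simps[simp] = va_0[OF bv] va_1[OF bv] va_uminus[OF bv] va_minus1[OF bv] va_nonneg[OF bv] va_zero_iff[OF bv]
lemmas bv_mult = va_mult[OF bv]

lemma i_add[simp]: "\<iota> (a + b) = \<iota> a + \<iota> b" using imm unfolding immediate_extension_def by blast
lemma i_mult[simp]: "\<iota> (a * b) = \<iota> a * \<iota> b" using imm unfolding immediate_extension_def by blast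
lemma i_one[simp]: "\<iota> 1 = 1" using imm unfolding immediate_extension_def by blast
lemma i_abs[simp]: "bv (\<iota> a) = av a" using imm unfolding immediate_extension_def by blast
lemma vg_eq: "value_group bv = value_group av" using imm unfolding immediate_extension_def by blast
lemma i_zero[simp]: "\<iota> 0 = 0"
proof -
  have "\<iota> (0 + 0) = \<iota> 0 + \<iota> 0" by (rule i_add)
  then have "\<iota> 0 = \<iota> 0 + \<iota> 0" by (simp only: add_0_right)
  then show ?thesis using add_cancel_left_right[of "\<iota> 0" "\<iota> 0"] by (metis (full_types))
qed
lemma i_uminus[simp]: "\<iota> (- a) = - \<iota> a"
  using add.inverse_unique[of "\<iota> a" "\<iota> (-a)"] i_add[of a "- a"] by simp
lemma i_diff[simp]: "\<iota> (a - b) = \<iota> a - \<iota> b" using i_add[of a "- b"] by simp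
lemma i_eq_iff[simp]: "\<iota> a = \<iota> b \<longleftrightarrow> a = b"
proof
  assume "\<iota> a = \<iota> b"
  then have "\<iota> (a - b) = 0" by simp
  then have "av (a - b) = 0" using i_abs[of "a - b"] by (simp del: i_diff i_abs)
  then show "a = b" by simp
qed simp
lemma i_zero_iff[simp]: "\<iota> a = 0 \<longleftrightarrow> a = 0" using i_eq_iff[of a 0] by simp
lemma i_inverse[simp]: "\<iota> (inverse a) = inverse (\<iota> a)"
proof (cases "a = 0")
  case False
  then have "\<iota> a * \<iota> (inverse a) = 1" using i_mult[of a "inverse a"] by simp
  then show ?thesis by (metis inverse_unique)
qed simp
lemma i_divide[simp]: "\<iota> (a / b) = \<iota> a / \<iota> b" by (simp add: divide_inverse)

lemma dist_props: "{bv (x - \<iota> a) | a. True} \<noteq> {} \<and> bdd_below {bv (x - \<iota> a) | a. True}"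
  by (auto intro!: bdd_belowI[of _ 0])

lemma dK_le: "dist_to_K bv \<iota> x \<le> bv (x - \<iota> a)"
  unfolding dist_to_K_def using dist_props by (auto intro!: cInf_lower)

lemma dK_nonneg: "0 \<le> dist_to_K bv \<iota> x"
  unfolding dist_to_K_def using dist_props by (auto intro!: cInf_greatest)

lemma dK_approx: assumes "dist_to_K bv \<iota> x < r" shows "\<exists>a. bv (x - \<iota> a) < r"
proof (rule ccontr)
  assume "\<not> ?thesis"
  then have "r \<le> dist_to_K bv \<iota> x" unfolding dist_to_K_def using dist_props
    by (intro cInf_greatest) (auto simp: not_less)
  then show False using assms by simp
qed

lemma dK_pos: assumes x: "x \<notin> range \<iota>" shows "0 < dist_to_K bv \<iota> x"
proof (rule ccontr)
  assume "\<not> ?thesis"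
  then have d0: "dist_to_K bv \<iota> x = 0" using dK_nonneg[of x] by linarith
  have "\<forall>n::nat. \<exists>a. bv (x - \<iota> a) < inverse (real (Suc n))"
    using dK_approx d0 by simp
  then obtain k where k: "\<And>n. bv (x - \<iota> (k n)) < inverse (real (Suc n))" by metis
  have "\<forall>e>0. \<exists>M. \<forall>m\<ge>M. \<forall>n\<ge>M. av (k m - k n) < e"
  proof (intro allI impI)
    fix e :: real assume "e > 0"
    then obtain M where M: "inverse (real (Suc M)) < e" using reals_Archimedean by blast
    show "\<exists>M. \<forall>m\<ge>M. \<forall>n\<ge>M. av (k m - k n) < e"
    proof (intro exI allI impI)
      fix m n assume mn: "M \<le> m" "M \<le> n"
      have "av (k m - k n) = bv ((x - \<iota> (k n)) - (x - \<iota> (k m)))" using i_abs[of "k m - k n"] by simp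
      also have "\<dots> \<le> max (bv (x - \<iota> (k n))) (bv (x - \<iota> (k m)))" using va_diff[OF bv] by blast
      also have "\<dots> < e"
      proof -
        have "inverse (real (Suc n)) \<le> inverse (real (Suc M))" "inverse (real (Suc m)) \<le> inverse (real (Suc M))"
          using mn by (simp_all add: field_simps)
        then show ?thesis using k[of n] k[of m] M unfolding max_less_iff_conj by linarith
      qed
      finally show "av (k m - k n) < e" .
    qed
  qed
  then obtain l where l: "\<And>e. e > 0 \<Longrightarrow> \<exists>M. \<forall>n\<ge>M. av (k n - l) < e"
    using compl unfolding abs_complete_def by blast
  have "bv (x - \<iota> l) < e" if e: "e > 0" for e
  proof -
    obtain M1 where M1: "inverse (real (Suc M1)) < e" using reals_Archimedean e by blast
    obtain M2 where M2: "\<And>n. n \<ge> M2 \<Longrightarrow> av (k n - l) < e" using l e by blast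
    define n where "n = max M1 M2"
    have "x - \<iota> l = (x - \<iota> (k n)) + \<iota> (k n - l)" by simp
    then have "bv (x - \<iota> l) \<le> max (bv (x - \<iota> (k n))) (av (k n - l))" using va_add[OF bv] by (metis i_abs)
    moreover have "bv (x - \<iota> (k n)) < e"
    proof -
      have "inverse (real (Suc n)) \<le> inverse (real (Suc M1))" unfolding n_def by (simp add: field_simps)
      then show ?thesis using k[of n] M1 by linarith
    qed
    moreover have "av (k n - l) < e" using M2 unfolding n_def by simp
    ultimately show ?thesis by linarith
  qed
  then have "bv (x - \<iota> l) = 0" using bv_simps(5)[of "x - \<iota> l"]
    by (metis less_irrefl order_le_less)
  then have "x = \<iota> l" by simp
  then show False using x by blast
qed

end

context NA3 begin

lemma nrm_diff_strict: "g \<in> dual sc E \<Longrightarrow> h \<in> dual sc E \<Longrightarrow> nrm g < nrm h \<Longrightarrow> nrm (g - h) = nrm h"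
  using nrm_strict[of "- h" g] dual_uminus' nrm_uminus by (simp add: add.commute)

lemma classify:
  assumes nOP: "\<not> OP"
  shows "\<exists>x t. x \<notin> range \<iota> \<and> 0 < t \<and> iso_span1x bv \<iota> dscale FF nrm x t"
proof -
  let ?S = "{nrm (g2 - dscale l g1) | l. True}"
  define \<delta> where "\<delta> = Inf ?S"
  have Sp: "?S \<noteq> {}" "bdd_below ?S"
    using nrm_nonneg dual_minus[OF g2 dual_dscale[OF g1]] by (auto intro!: bdd_belowI[of _ 0])
  have \<delta>le: "\<delta> \<le> nrm (g2 - dscale l g1)" for l unfolding \<delta>_def using Sp by (auto intro!: cInf_lower)
  have \<delta>app: "\<exists>l. nrm (g2 - dscale l g1) < r" if "\<delta> < r" for r
  proof (rule ccontr)
    assume "\<not> ?thesis"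
    then have "r \<le> \<delta>" unfolding \<delta>_def using Sp by (intro cInf_greatest) (auto simp: not_less)
    then show False using that by simp
  qed
  have gd: "\<And>l. g2 - dscale l g1 \<in> dual sc E" using dual_minus[OF g2 dual_dscale[OF g1]] .
  have gF: "\<And>l. g2 - dscale l g1 \<in> FF" using FF_diff[OF g2F FF_scale[OF g1F]] .
  have gnz: "g2 - dscale l g1 \<noteq> 0" for l
  proof
    assume "g2 - dscale l g1 = 0"
    then have "(g2 - dscale l g1) a2 = 0" by simp
    then show False using d12 d22 by simp
  qed
  have n1: "nrm g1 > 0" using nrm_pos[OF g1 g1_nz] .
  have strict: "\<delta> < nrm (g2 - dscale l g1)" for l
  proof (rule ccontr)
    assume "\<not> ?thesis"
    then have eq: "nrm (g2 - dscale l g1) = \<delta>" using \<delta>le[of l] by simp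
    have "orthpair (g2 - dscale l g1) g1"
    proof (rule orth_from_lower[OF gF g1F gnz g1_nz])
      fix \<alpha> \<beta>
      show "av \<alpha> * nrm (g2 - dscale l g1) \<le> nrm (dscale \<alpha> (g2 - dscale l g1) + dscale \<beta> g1)"
      proof (cases "\<alpha> = 0")
        case True then show ?thesis using nrm_nonneg[OF dual_plus[OF dual_dscale[OF gd] dual_dscale[OF g1]], of \<alpha> l \<beta>] by simp
      next
        case False
        have "dscale \<alpha> (g2 - dscale l g1) + dscale \<beta> g1 = dscale \<alpha> (g2 - dscale (l - \<beta> / \<alpha>) g1)"
          using False by (simp add: dscale_def fun_eq_iff field_simps)
        then have "nrm (dscale \<alpha> (g2 - dscale l g1) + dscale \<beta> g1) = av \<alpha> * nrm (g2 - dscale (l - \<beta> / \<alpha>) g1)"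
          using nrm_dscale[OF gd] by simp
        then show ?thesis using eq \<delta>le[of "l - \<beta> / \<alpha>"] by (simp add: mult_left_mono)
      qed
    qed
    then show False using nOP OP_def by blast
  qed
  define r where "r n = \<delta> + inverse (real (Suc n))" for n
  have "\<forall>n. \<exists>l. nrm (g2 - dscale l g1) < r n" using \<delta>app r_def by simp
  then obtain lam where lam: "\<And>n. nrm (g2 - dscale (lam n) g1) < r n" by metis
  define \<rho> where "\<rho> n = r n / nrm g1" for n
  have \<delta>0: "0 \<le> \<delta>" unfolding \<delta>_def using Sp(1) nrm_nonneg[OF gd] by (intro cInf_greatest) auto
  have rpos: "0 < r n" for n unfolding r_def using \<delta>0 inverse_Suc[where 'a=real, of n] by linarith
  have rdec: "r (Suc n) \<le> r n" for n unfolding r_def by (simp add: field_simps)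
  have lamdiff: "av (lam m - lam n) * nrm g1 \<le> max (r n) (r m)" for m n
  proof -
    have "dscale (lam m - lam n) g1 = (g2 - dscale (lam n) g1) - (g2 - dscale (lam m) g1)"
      by (simp add: dscale_def fun_eq_iff algebra_simps)
    then have "nrm (dscale (lam m - lam n) g1) \<le> max (nrm (g2 - dscale (lam n) g1)) (nrm (g2 - dscale (lam m) g1))"
      using nrm_diff[OF gd gd] by simp
    then show ?thesis using nrm_dscale[OF g1] lam[of n] lam[of m] by simp
  qed
  have nested: "\<forall>k. vball bv (\<iota> (lam (Suc k))) (\<rho> (Suc k)) \<subseteq> vball bv (\<iota> (lam k)) (\<rho> k)"
  proof (intro allI subsetI)
    fix k y assume "y \<in> vball bv (\<iota> (lam (Suc k))) (\<rho> (Suc k))"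
    then have y: "bv (y - \<iota> (lam (Suc k))) \<le> \<rho> (Suc k)" unfolding vball_def by simp
    have "av (lam (Suc k) - lam k) \<le> \<rho> k"
      using lamdiff[of "Suc k" k] rdec[of k] n1 unfolding \<rho>_def by (simp add: le_divide_eq)
    moreover have "\<rho> (Suc k) \<le> \<rho> k" unfolding \<rho>_def using rdec n1 by (simp add: divide_right_mono)
    moreover have eqy: "y - \<iota> (lam k) = (y - \<iota> (lam (Suc k))) + \<iota> (lam (Suc k) - lam k)" by simp
    have "bv (y - \<iota> (lam k)) \<le> max (bv (y - \<iota> (lam (Suc k)))) (bv (\<iota> (lam (Suc k) - lam k)))"
      unfolding eqy by (rule va_add[OF bv])
    then have "bv (y - \<iota> (lam k)) \<le> max (bv (y - \<iota> (lam (Suc k)))) (av (lam (Suc k) - lam k))"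
      by (simp only: i_abs)
    ultimately have "bv (y - \<iota> (lam k)) \<le> \<rho> k" using y by linarith
    then show "y \<in> vball bv (\<iota> (lam k)) (\<rho> k)" unfolding vball_def by simp
  qed
  have "(\<Inter>k. vball bv (\<iota> (lam k)) (\<rho> k)) \<noteq> {}"
    using sphc nested rpos n1 unfolding spherically_complete_def \<rho>_def by simp
  then obtain x where x: "\<And>k. bv (x - \<iota> (lam k)) \<le> \<rho> k" unfolding vball_def by auto
  have key: "nrm (g2 - dscale l g1) = nrm g1 * bv (x - \<iota> l)" for l
  proof -
    define p where "p = nrm (g2 - dscale l g1)"
    have p\<delta>: "\<delta> < p" using strict p_def by simp
    have "0 < p - \<delta>" using p\<delta> by simp
    then obtain n where n: "inverse (real (Suc n)) < p - \<delta>" using reals_Archimedean by blast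
    have rn: "r n < p" using n unfolding r_def by linarith
    have "dscale (l - lam n) g1 = (g2 - dscale (lam n) g1) - (g2 - dscale l g1)"
      by (simp add: dscale_def fun_eq_iff algebra_simps)
    moreover have "nrm (g2 - dscale (lam n) g1) < nrm (g2 - dscale l g1)" using lam[of n] rn p_def by simp
    ultimately have "nrm (dscale (l - lam n) g1) = p" using nrm_diff_strict[OF gd gd] p_def by simp
    then have ap: "av (l - lam n) * nrm g1 = p" using nrm_dscale[OF g1] by simp
    have "bv (x - \<iota> (lam n)) < bv (\<iota> (lam n) - \<iota> l)"
    proof -
      have "bv (x - \<iota> (lam n)) \<le> r n / nrm g1" using x[of n] \<rho>_def by simp
      also have "\<dots> < p / nrm g1" using rn n1 by (simp add: divide_strict_right_mono)
      also have "\<dots> = av (l - lam n)" using ap n1 by (simp add: field_simps)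
      also have "\<dots> = bv (\<iota> (lam n) - \<iota> l)" using i_abs[of "l - lam n"] va_commute[OF bv] by (metis i_diff)
      finally show ?thesis .
    qed
    then have "bv ((\<iota> (lam n) - \<iota> l) + (x - \<iota> (lam n))) = bv (\<iota> (lam n) - \<iota> l)"
      using va_strict[OF bv] by blast
    then have "bv (x - \<iota> l) = av (l - lam n)" using i_abs[of "l - lam n"] va_commute[OF bv, of "\<iota> l" "\<iota> (lam n)"]
      by (simp add: algebra_simps)
    then show ?thesis using ap p_def by (simp add: mult.commute)
  qed
  have xK: "x \<notin> range \<iota>"
  proof
    assume "x \<in> range \<iota>"
    then obtain l where "x = \<iota> l" by blast
    then have "nrm (g2 - dscale l g1) = 0" using key[of l] by simp
    then show False using nrm_zero_iff[OF gd] gnz by blast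
  qed
  define T where "T g = \<iota> (g a1) + \<iota> (g a2) * x" for g :: "'b \<Rightarrow> 'a"
  have Tinj: "inj_on T FF"
  proof (rule inj_onI)
    fix g h assume gh: "g \<in> FF" "h \<in> FF" "T g = T h"
    have "g a2 = h a2"
    proof (rule ccontr)
      assume ne: "g a2 \<noteq> h a2"
      from gh(3) have "(\<iota> (g a2) - \<iota> (h a2)) * x = \<iota> (h a1) - \<iota> (g a1)" unfolding T_def by (simp add: algebra_simps)
      then have "x = \<iota> ((h a1 - g a1) / (g a2 - h a2))" using ne by (simp add: field_simps)
      then show False using xK by blast
    qed
    moreover then have "g a1 = h a1" using gh(3) unfolding T_def by simp
    ultimately show "g = h" using FF_coord gh(1,2) by metis
  qed
  have Timg: "T ` FF = span1x \<iota> x"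
  proof
    show "T ` FF \<subseteq> span1x \<iota> x" unfolding T_def span1x_def by blast
    show "span1x \<iota> x \<subseteq> T ` FF"
    proof
      fix z assume "z \<in> span1x \<iota> x"
      then obtain a c where z: "z = \<iota> a + \<iota> c * x" unfolding span1x_def by blast
      have "T (dscale a g1 + dscale c g2) = z" unfolding T_def z using d11 d12 d21 d22 by simp
      then show "z \<in> T ` FF" using FF_memI by blast
    qed
  qed
  have Tnorm: "nrm g1 * bv (T g) = nrm g" if g: "g \<in> FF" for g
  proof -
    define \<alpha> \<beta> where "\<alpha> = g a1" and "\<beta> = g a2"
    have ge: "g = dscale \<alpha> g1 + dscale \<beta> g2" using FF_coord[OF g] \<alpha>_def \<beta>_def by simp
    show ?thesis
    proof (cases "\<beta> = 0")
      case True
      have gg: "g = dscale \<alpha> g1" using ge True by simp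
      have "nrm g = av \<alpha> * nrm g1" by (subst gg) (rule nrm_dscale[OF g1])
      moreover have "T g = \<iota> \<alpha>" unfolding T_def using True \<beta>_def \<alpha>_def by simp
      ultimately show ?thesis by (simp add: mult.commute)
    next
      case False
      define l where "l = - \<alpha> / \<beta>"
      have gl: "g = dscale \<beta> (g2 - dscale l g1)" using ge False by (simp add: l_def dscale_def fun_eq_iff field_simps)
      have "nrm g = av \<beta> * nrm (g2 - dscale l g1)" by (subst gl) (rule nrm_dscale[OF gd])
      also have "\<dots> = av \<beta> * (nrm g1 * bv (x - \<iota> l))" by (simp only: key)
      finally have "nrm g = av \<beta> * (nrm g1 * bv (x - \<iota> l))" .
      moreover have "T g = \<iota> \<beta> * (x - \<iota> l)" unfolding T_def \<alpha>_def[symmetric] \<beta>_def[symmetric] l_def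
        using False by (simp add: field_simps)
      ultimately show ?thesis by (simp add: bv_mult)
    qed
  qed
  have "iso_span1x bv \<iota> dscale FF nrm x (nrm g1)"
    unfolding iso_span1x_def
  proof (intro exI[of _ T] conjI ballI allI)
    show "bij_betw T FF (span1x \<iota> x)" using Tinj Timg bij_betw_def by blast
    show "T (f + g) = T f + T g" for f g unfolding T_def by (simp add: algebra_simps)
    show "T (dscale c f) = \<iota> c * T f" for c f unfolding T_def by (simp add: algebra_simps)
    show "nrm g1 * bv (T f) = nrm f" if "f \<in> FF" for f using Tnorm that by blast
  qed
  then show ?thesis using xK n1 by blast
qed

end

context NA3 begin

lemma iso_value:
  assumes xK: "x \<notin> range \<iota>" and t: "0 < t" and iso: "iso_span1x bv \<iota> dscale FF nrm x t"
    and v: "v \<in> E" "v \<notin> WW"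
  shows "q v * t * dist_to_K bv \<iota> x \<in> value_group av"
proof -
  obtain T where T: "bij_betw T FF (span1x \<iota> x)" "\<And>f g. f \<in> FF \<Longrightarrow> g \<in> FF \<Longrightarrow> T (f + g) = T f + T g"
    "\<And>c f. f \<in> FF \<Longrightarrow> T (dscale c f) = \<iota> c * T f" "\<And>f. f \<in> FF \<Longrightarrow> t * bv (T f) = nrm f"
    using iso unfolding iso_span1x_def by blast
  have span1: "\<iota> a + \<iota> c * x \<in> span1x \<iota> x" for a c by (auto simp: span1x_def)
  have img: "T ` FF = span1x \<iota> x" using bij_betw_imp_surj_on[OF T(1)] .
  have inj: "inj_on T FF" using bij_betw_imp_inj_on[OF T(1)] .
  have "1 \<in> span1x \<iota> x" using span1[of 1 0] by simp
  then have "1 \<in> T ` FF" using img by simp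
  then obtain e1 where e1: "e1 \<in> FF" "T e1 = 1" by (metis imageE)
  have "x \<in> span1x \<iota> x" using span1[of 0 1] by simp
  then have "x \<in> T ` FF" using img by simp
  then obtain ex where ex: "ex \<in> FF" "T ex = x" by (metis imageE)
  have lin: "T (dscale a e1 + dscale c ex) = \<iota> a + \<iota> c * x" for a c
    using T(2)[OF FF_scale[OF e1(1)] FF_scale[OF ex(1)]] T(3)[OF e1(1)] T(3)[OF ex(1)] e1(2) ex(2) by simp
  have rep: "\<exists>a c. g = dscale a e1 + dscale c ex \<and> T g = \<iota> a + \<iota> c * x" if g: "g \<in> FF" for g
  proof -
    have "T g \<in> span1x \<iota> x" using img g by blast
    then obtain a c where Tg: "T g = \<iota> a + \<iota> c * x" unfolding span1x_def by blast
    have "dscale a e1 + dscale c ex \<in> FF" using FF_add FF_scale e1(1) ex(1) by blast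
    then have "g = dscale a e1 + dscale c ex" using inj g Tg lin[of a c] by (metis inj_onD)
    then show ?thesis using Tg by blast
  qed
  define d where "d = dist_to_K bv \<iota> x"
  have dp: "0 < d" unfolding d_def using dK_pos[OF xK] .
  have dle: "d \<le> bv (x - \<iota> k)" for k unfolding d_def by (rule dK_le)
  define A B where "A = e1 v" and "B = ex v"
  define Lc where "Lc = \<iota> A * x - \<iota> B"
  have AB: "A \<noteq> 0 \<or> B \<noteq> 0"
  proof (rule ccontr)
    assume "\<not> ?thesis"
    then have "g v = 0" if "g \<in> FF" for g using rep[OF that] A_def B_def by auto
    then have "g1 v = 0" "g2 v = 0" using g1F g2F by auto
    then show False using v WW_def by auto
  qed
  have Lnz: "Lc \<noteq> 0"
  proof
    assume L0: "Lc = 0"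
    show False
    proof (cases "A = 0")
      case True then show False using L0 AB Lc_def by simp
    next
      case False
      then have "x = \<iota> (B / A)" using L0 Lc_def by (simp add: field_simps)
      then show False using xK by blast
    qed
  qed
  have LA: "av A * d \<le> bv Lc"
  proof (cases "A = 0")
    case True then show ?thesis by simp
  next
    case False
    have "Lc = \<iota> A * (x - \<iota> (B / A))" unfolding Lc_def using False by (simp add: field_simps)
    then have "bv Lc = av A * bv (x - \<iota> (B / A))" by (simp add: bv_mult)
    then show ?thesis using dle[of "B / A"] by (simp add: mult_left_mono)
  qed
  define M where "M = bv Lc / (t * d)"
  have upper: "av (g v) \<le> M * nrm g" if g: "g \<in> FF" for g
  proof -
    obtain a c where ac: "g = dscale a e1 + dscale c ex" "T g = \<iota> a + \<iota> c * x" using rep[OF g] by blast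
    define z where "z = \<iota> a + \<iota> c * x"
    have ng: "nrm g = t * bv z" using T(4)[OF g] ac z_def by simp
    have gv: "g v = a * A + c * B" using ac A_def B_def by simp
    have eq: "\<iota> (g v) = \<iota> A * z - \<iota> c * Lc" unfolding gv z_def Lc_def by (simp add: algebra_simps)
    have "av (g v) = bv (\<iota> A * z - \<iota> c * Lc)" using i_abs[of "g v"] unfolding eq by (rule sym)
    then have "av (g v) \<le> max (av A * bv z) (av c * bv Lc)"
      using va_diff[OF bv, of "\<iota> A * z" "\<iota> c * Lc"] by (simp add: bv_mult)
    moreover have "av c * d \<le> bv z"
    proof (cases "c = 0")
      case True then show ?thesis by simp
    next
      case False
      have "z = \<iota> c * (x - \<iota> (- a / c))" unfolding z_def using False by (simp add: field_simps)
      then have "bv z = av c * bv (x - \<iota> (- a / c))" by (simp add: bv_mult)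
      then show ?thesis using dle[of "- a / c"] by (simp add: mult_left_mono)
    qed
    moreover have "av A * bv z \<le> bv Lc * bv z / d"
      using LA dp mult_right_mono[OF LA, of "bv z"] by (simp add: field_simps)
    moreover have "av c * bv Lc \<le> bv Lc * bv z / d"
    proof -
      have "av c * d * bv Lc \<le> bv z * bv Lc" using \<open>av c * d \<le> bv z\<close> by (simp add: mult_right_mono)
      then show ?thesis using dp by (simp add: field_simps)
    qed
    ultimately have "av (g v) \<le> bv Lc * bv z / d" by linarith
    also have "\<dots> = M * nrm g" unfolding M_def ng using t dp by (simp add: field_simps)
    finally show ?thesis .
  qed
  have lower: "\<exists>g\<in>FF. g \<noteq> 0 \<and> s * M * nrm g \<le> av (g v)" if s: "0 < s" "s < 1" for s
  proof (cases "bv Lc \<le> av A * d")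
    case True
    have ne1: "nrm e1 = t" using T(4)[OF e1(1)] e1(2) by simp
    then have e1nz: "e1 \<noteq> 0" using t by auto
    have "s * M * nrm e1 = s * (bv Lc / d)" unfolding M_def ne1 using t by (simp add: field_simps)
    also have "\<dots> \<le> bv Lc / d" using s mult_right_mono[of s 1 "bv Lc / d"] dp by simp
    also have "\<dots> \<le> av A" using True dp by (simp add: divide_le_eq)
    finally show ?thesis using e1 e1nz A_def by blast
  next
    case False
    define r where "r = (if A = 0 then d / s else min (d / s) (bv Lc / av A))"
    have dr: "d < r"
    proof -
      have "d < d / s" using s dp by (simp add: field_simps)
      moreover have "A \<noteq> 0 \<Longrightarrow> d < bv Lc / av A" using False va_pos[OF av] by (simp add: field_simps)
      ultimately show ?thesis unfolding r_def by auto
    qed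
    obtain k where k: "bv (x - \<iota> k) < r" using dK_approx dr d_def by blast
    define g where "g = dscale (- k) e1 + dscale 1 ex"
    have gF: "g \<in> FF" unfolding g_def using FF_add FF_scale e1(1) ex(1) by blast
    have Tg: "T g = \<iota> (- k) + \<iota> 1 * x" unfolding g_def by (rule lin)
    have ng: "nrm g = t * bv (x - \<iota> k)" using T(4)[OF gF] Tg by simp
    have xk: "x - \<iota> k \<noteq> 0" using xK by auto
    have gnz: "g \<noteq> 0" using ng t xk by auto
    have gv: "\<iota> (g v) = - Lc + \<iota> A * (x - \<iota> k)" unfolding g_def Lc_def A_def B_def by (simp add: algebra_simps)
    have small: "bv (\<iota> A * (x - \<iota> k)) < bv Lc"
    proof (cases "A = 0")
      case True then show ?thesis using Lnz va_pos[OF bv] by simp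
    next
      case A: False
      have "bv (x - \<iota> k) < bv Lc / av A" using k A unfolding r_def by simp
      then have "av A * bv (x - \<iota> k) < bv Lc" using A va_pos[OF av A] by (simp add: field_simps)
      then show ?thesis by (simp only: bv_mult i_abs)
    qed
    have st: "bv (- Lc + \<iota> A * (x - \<iota> k)) = bv (- Lc)" using va_strict[OF bv, of "\<iota> A * (x - \<iota> k)" "- Lc"] small by simp
    have "av (g v) = bv (\<iota> (g v))" by simp
    also have "\<dots> = bv Lc" unfolding gv st by simp
    finally have "av (g v) = bv Lc" .
    moreover have "s * M * nrm g \<le> bv Lc"
    proof -
      have "s * bv (x - \<iota> k) < d" using k s dp unfolding r_def by (auto simp: field_simps split: if_splits)
      then have "s * bv (x - \<iota> k) / d \<le> 1" using dp by simp
      moreover have "s * M * nrm g = bv Lc * (s * bv (x - \<iota> k) / d)" unfolding M_def ng using t dp by (simp add: field_simps)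
      ultimately show ?thesis using mult_left_mono[of "s * bv (x - \<iota> k) / d" 1 "bv Lc"] by simp
    qed
    ultimately show ?thesis using gF gnz by auto
  qed
  have "q v \<le> M"
  proof (rule ratio_le)
    fix s :: real assume s: "0 < s" "s < 1"
    obtain g where g: "g \<in> FF" "g \<noteq> 0" "s * q v * nrm g \<le> av (g v)" using polarity[OF v s] by blast
    have "0 < nrm g" using nrm_pos FFd g by auto
    moreover have "s * q v * nrm g \<le> M * nrm g" using g(3) upper[OF g(1)] by linarith
    ultimately show "s * q v \<le> M" using mult_right_le_imp_le by blast
  qed
  moreover have "M \<le> q v"
  proof (rule ratio_le)
    fix s :: real assume s: "0 < s" "s < 1"
    obtain g where g: "g \<in> FF" "g \<noteq> 0" "s * M * nrm g \<le> av (g v)" using lower[OF s] by blast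
    have "0 < nrm g" using nrm_pos FFd g by auto
    moreover have "s * M * nrm g \<le> q v * nrm g" using g(3) eval_bound[OF g(1) v(1)] by (simp add: mult.commute)
    ultimately show "s * M \<le> q v" using mult_right_le_imp_le by blast
  qed
  ultimately have "q v = M" by simp
  then have "q v * t * d = bv Lc" unfolding M_def using t dp by simp
  moreover have "bv Lc \<in> value_group bv" using Lnz unfolding value_group_def by blast
  then have "bv Lc \<in> value_group av" using vg_eq by simp
  ultimately show ?thesis unfolding d_def by simp
qed

definition good where
  "good \<longleftrightarrow> orth_dim dscale FF nrm = 2 \<or>
     (\<exists>x t. x \<notin> range \<iota> \<and> 0 < t \<and> t * dist_to_K bv \<iota> x \<notin> value_group av
        \<and> iso_span1x bv \<iota> dscale FF nrm x t)"

lemma good_iff_Ext: "good \<longleftrightarrow> Ext"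
proof
  assume gd: good
  show Ext
  proof (cases OP)
    case True then show ?thesis using OP_Ext OP_def by blast
  next
    case False
    then have "orth_dim dscale FF nrm \<noteq> 2" using notOP_orth_dim by blast
    then obtain x t where xt: "x \<notin> range \<iota>" "0 < t" "t * dist_to_K bv \<iota> x \<notin> value_group av"
      "iso_span1x bv \<iota> dscale FF nrm x t" using gd good_def by blast
    show Ext
    proof (rule notq_Ext)
      fix v assume v: "v \<in> E" "v \<notin> WW"
      have a: "q v * t * dist_to_K bv \<iota> x \<in> value_group av" using iso_value[OF xt(1,2,4) v] .
      show "q v \<notin> value_group av"
      proof
        assume "q v \<in> value_group av"
        then have "(q v * t * dist_to_K bv \<iota> x) / q v \<in> value_group av"
          using value_group_divide[OF av a] by blast
        moreover have "q v > 0" using q_pos v by blast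
        ultimately show False using xt(3) by simp
      qed
    qed
  qed
next
  assume ext: Ext
  show good
  proof (cases OP)
    case True then show ?thesis using OP_orth_dim OP_def good_def by blast
  next
    case False
    obtain x t where xt: "x \<notin> range \<iota>" "0 < t" "iso_span1x bv \<iota> dscale FF nrm x t"
      using classify[OF False] by blast
    have a1W: "a1 \<notin> WW" using d11 WW_def by auto
    have nq: "q a1 \<notin> value_group av" using notOP_Ext[OF False ext a1 a1W] .
    have a: "q a1 * t * dist_to_K bv \<iota> x \<in> value_group av" using iso_value[OF xt a1 a1W] .
    have "t * dist_to_K bv \<iota> x \<notin> value_group av"
    proof
      assume td: "t * dist_to_K bv \<iota> x \<in> value_group av"
      then have "(q a1 * t * dist_to_K bv \<iota> x) / (t * dist_to_K bv \<iota> x) \<in> value_group av"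
        using value_group_divide[OF av a] by blast
      moreover have "t * dist_to_K bv \<iota> x > 0" using value_group_pos[OF av td] .
      ultimately show False using nq xt(2) dK_pos[OF xt(1)] by simp
    qed
    then show ?thesis using good_def xt by blast
  qed
qed

end

lemma real_one_le_aux:
  fixes a b :: real
  assumes "0 < a" "0 \<le> b" "\<And>e. 0 < e \<Longrightarrow> a \<le> b * (a + e)"
  shows "1 \<le> b"
proof (rule ccontr)
  assume "\<not> 1 \<le> b"
  then have b1: "b < 1" by simp
  define e where "e = a * (1 - b) / (b + 1)"
  have e: "0 < e" unfolding e_def using assms b1 by simp
  have "a \<le> b * (a + e)" using assms(3)[OF e] .
  moreover have "b * (a + e) = a * b * 2 / (b + 1)" unfolding e_def using assms by (simp add: field_simps)
  moreover have "a * b * 2 / (b + 1) < a" using assms b1 by (simp add: field_simps)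
  ultimately show False by linarith
qed

context NA begin

lemma SE_sub:
  assumes se: "SE av sc E N" and D: "subspace D" "D \<subseteq> E"
  shows "SE av sc D N"
  unfolding SE_def
proof (intro allI impI)
  fix D1 f assume a: "subspace D1 \<and> D1 \<subseteq> D \<and> f \<in> dual sc D1 \<and> opnorm av D1 N f = 1"
  then have "D1 \<subseteq> E" using D by blast
  then obtain g where g: "g \<in> dual sc E" "\<And>x. x \<in> D1 \<Longrightarrow> g x = f x" "nrm g = 1"
    using se a unfolding SE_def by blast
  define g' where "g' = restr D g"
  have g'd: "g' \<in> dual sc D" unfolding g'_def using restr_dual[OF D(2,1) g(1)] .
  have ext: "\<And>x. x \<in> D1 \<Longrightarrow> g' x = f x" unfolding g'_def restr_def using a g(2) by auto
  have "opnorm av D N g' \<le> 1" using opnorm_restr_le[OF D(1) E_sub D(2) subset_refl g(1)] g(3) g'_def by simp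
  moreover have "1 \<le> opnorm av D N g'"
    using opnorm_ext_ge[of D1 D g' f] a D g'd ext by auto
  ultimately show "\<exists>g\<in>dual sc D. (\<forall>x\<in>D1. g x = f x) \<and> opnorm av D N g = 1" using g'd ext by auto
qed

end

context NA3 begin

lemma SE_Ext: assumes se: "SE av sc E N" shows Ext
  unfolding Ext_def
proof (intro ballI allI impI)
  fix v c assume v: "v \<in> E" and c: "c \<noteq> 0 \<and> q v = av c"
  have qv: "0 < q v" using c va_pos[OF av] by simp
  have vW: "v \<notin> WW" using q_WW qv by force
  obtain \<phi> where \<phi>: "\<phi> \<in> FF" "\<phi> v = c"
  proof (cases "g1 v = 0")
    case True
    then have "g2 v \<noteq> 0" using v vW WW_def by auto
    then show ?thesis using that[of "dscale (c / g2 v) g2"] FF_scale[OF g2F] by simp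
  next
    case False
    then show ?thesis using that[of "dscale (c / g1 v) g1"] FF_scale[OF g1F] by simp
  qed
  have \<phi>d: "\<phi> \<in> dual sc E" using FFd \<phi>(1) .
  define X where "X = {w + sc k v | w k. w \<in> WW}"
  have XE: "X \<subseteq> E" unfolding X_def using WW_sub E_add E_scale v by blast
  have Xs: "subspace X"
    unfolding subspace_def
  proof (intro conjI ballI allI)
    show "0 \<in> X" unfolding X_def using subspace_0[OF WW_subspace] by (auto intro!: exI[of _ 0])
  next
    fix x y assume "x \<in> X" "y \<in> X"
    then obtain w k w' k' where "x = w + sc k v" "y = w' + sc k' v" "w \<in> WW" "w' \<in> WW" unfolding X_def by blast
    then have "x + y = (w + w') + sc (k + k') v" "w + w' \<in> WW"
      using subspace_add[OF WW_subspace] by (auto simp: scale_left_distrib)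
    then show "x + y \<in> X" unfolding X_def by blast
  next
    fix c x assume "x \<in> X"
    then obtain w k where "x = w + sc k v" "w \<in> WW" unfolding X_def by blast
    then have "sc c x = sc c w + sc (c * k) v" "sc c w \<in> WW"
      using subspace_scale[OF WW_subspace] by (auto simp: scale_right_distrib)
    then show "sc c x \<in> X" unfolding X_def by blast
  qed
  have WX: "WW \<subseteq> X"
  proof
    fix x assume "x \<in> WW"
    moreover have "x = x + sc 0 v" by simp
    ultimately show "x \<in> X" unfolding X_def by blast
  qed
  have vX: "v \<in> X" unfolding X_def using subspace_0[OF WW_subspace] by (auto intro!: exI[of _ 0] exI[of _ 1])
  define f where "f = restr X \<phi>"
  have fd: "f \<in> dual sc X" unfolding f_def using restr_dual[OF XE Xs \<phi>d] .
  have fX: "f x = \<phi> x" if "x \<in> X" for x unfolding f_def restr_def using that by simp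
  have on: "opnorm av X N f = 1"
  proof (rule antisym)
    show "opnorm av X N f \<le> 1"
    proof (rule opnorm_props(3)[OF Xs XE fd])
      fix x assume x: "x \<in> X"
      then obtain w k where wk: "x = w + sc k v" "w \<in> WW" unfolding X_def by blast
      have "f x = k * c" using fX[OF x] wk dual_add[OF \<phi>d] dual_scale[OF \<phi>d v] WW_sub E_scale v
          FF_vanish[OF \<phi>(1)] \<phi>(2) by auto
      then have "av (f x) = av k * q v" using c by (simp add: av_mult)
      also have "\<dots> \<le> N (sc k v + w)" using q_scale_le[OF v wk(2)] .
      finally show "av (f x) \<le> 1 * N x" using wk by (simp add: add.commute)
    qed simp
  next
    have onn: "0 \<le> opnorm av X N f" using opnorm_props(1)[OF Xs XE fd] .
    show "1 \<le> opnorm av X N f"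
    proof (rule real_one_le_aux[OF _ onn])
      show "0 < q v" using qv .
      fix e :: real assume e: "0 < e"
      obtain w where w: "w \<in> WW" "N (v + w) < q v + e" using q2[OF v e] by blast
      have vw: "v + w \<in> X" unfolding X_def using w(1) by (auto intro!: exI[of _ w] exI[of _ 1] simp: add.commute)
      have "f (v + w) = c" using fX[OF vw] dual_add[OF \<phi>d v] w(1) WW_sub FF_vanish[OF \<phi>(1)] \<phi>(2) by auto
      then have "q v \<le> opnorm av X N f * N (v + w)" using opnorm_props(2)[OF Xs XE fd vw] c by simp
      also have "\<dots> \<le> opnorm av X N f * (q v + e)" using w(2) onn by (simp add: mult_left_mono)
      finally show "q v \<le> opnorm av X N f * (q v + e)" .
    qed
  qed
  obtain g where g: "g \<in> dual sc E" "\<And>x. x \<in> X \<Longrightarrow> g x = f x" "nrm g = 1"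
    using se Xs XE fd on unfolding SE_def by blast
  have gF: "g \<in> FF"
  proof (rule perp_in_FF[OF g(1)])
    fix w assume "w \<in> WW"
    then show "g w = 0" using g(2) WX fX FF_vanish[OF \<phi>(1)] by auto
  qed
  have "g v = c" using g(2)[OF vX] fX[OF vX] \<phi>(2) by simp
  then show "\<exists>g\<in>FF. g v = c \<and> nrm g \<le> 1" using gF g(3) by auto
qed

end

context NA begin

lemma good_of_SE:
  fixes bv :: "'c::field \<Rightarrow> real" and \<iota> :: "'a \<Rightarrow> 'c"
  assumes bv: "nonarch_abs bv" "spherically_complete bv" "immediate_extension av bv \<iota>"
    and se: "SE av sc E N"
    and F: "dv.subspace F" "F \<subseteq> dual sc E" "dv.dim F = 2"
  shows "orth_dim dscale F nrm = 2 \<or>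
     (\<exists>x t. x \<notin> range \<iota> \<and> 0 < t \<and> t * dist_to_K bv \<iota> x \<notin> value_group av
        \<and> iso_span1x bv \<iota> dscale F nrm x t)"
proof -
  obtain g1 g2 a1 a2 where s: "g1 \<in> dual sc E" "g2 \<in> dual sc E" "a1 \<in> E" "a2 \<in> E"
    "g1 a1 = 1" "g1 a2 = 0" "g2 a1 = 0" "g2 a2 = 1" "F = {dscale a g1 + dscale b g2 | a b. True}"
    by (rule two_dim_setup[OF F])
  interpret N3: NA3 sc av E N g1 g2 a1 a2 bv \<iota>
    by (unfold_locales) (use s bv av compl nns fdim in auto)
  have FF: "N3.FF = F" using s(9) N3.FF_def by simp
  have "N3.Ext" using N3.SE_Ext[OF se] .
  then have "N3.good" using N3.good_iff_Ext by simp
  then show ?thesis unfolding N3.good_def FF .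
qed

lemma SE_of_parts:
  fixes bv :: "'c::field \<Rightarrow> real" and \<iota> :: "'a \<Rightarrow> 'c"
  assumes bv: "nonarch_abs bv" "spherically_complete bv" "immediate_extension av bv \<iota>"
    and h1: "\<And>D. subspace D \<Longrightarrow> D \<subseteq> E \<Longrightarrow> dim D + 1 = dim E \<Longrightarrow> SE av sc D N"
    and h2: "\<And>F. dv.subspace F \<Longrightarrow> F \<subseteq> dual sc E \<Longrightarrow> dv.dim F = 2 \<Longrightarrow>
       orth_dim dscale F nrm = 2 \<or>
       (\<exists>x t. x \<notin> range \<iota> \<and> 0 < t \<and> t * dist_to_K bv \<iota> x \<notin> value_group av
          \<and> iso_span1x bv \<iota> dscale F nrm x t)"
  shows "SE av sc E N"
  unfolding SE_def
proof (intro allI impI)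
  fix D f assume a: "subspace D \<and> D \<subseteq> E \<and> f \<in> dual sc D \<and> opnorm av D N f = 1"
  then have D: "subspace D" "D \<subseteq> E" and fd: "f \<in> dual sc D" and fn: "opnorm av D N f = 1" by auto
  show "\<exists>g\<in>dual sc E. (\<forall>x\<in>D. g x = f x) \<and> nrm g = 1"
  proof (cases "D = E")
    case True then show ?thesis using fd fn by auto
  next
    case False
    obtain H b where H: "subspace H" "D \<subseteq> H" "H \<subseteq> E" "dim H + 1 = dim E" "b \<in> E" "b \<notin> H"
      "\<And>x. x \<in> E \<Longrightarrow> \<exists>k. x - sc k b \<in> H"
      by (rule hyperplane_exists[OF D False]) blast
    have seH: "SE av sc H N" using h1[OF H(1,3,4)] .
    obtain f1 where f1: "f1 \<in> dual sc H" "\<And>x. x \<in> D \<Longrightarrow> f1 x = f x" "opnorm av H N f1 = 1"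
      using seH D fd fn H(2) unfolding SE_def by blast
    obtain v where v: "v \<in> H" "f1 v = 1"
    proof -
      have "\<exists>x\<in>H. f1 x \<noteq> 0"
      proof (rule ccontr)
        assume "\<not> ?thesis"
        then have "opnorm av H N f1 \<le> 0" by (intro opnorm_props(3)[OF H(1,3) f1(1)]) auto
        then show False using f1(3) by simp
      qed
      then obtain x where x: "x \<in> H" "f1 x \<noteq> 0" by blast
      show ?thesis
        using that[of "sc (inverse (f1 x)) x"] subspace_scale[OF H(1) x(1)] dual_scale[OF f1(1) x(1)] x(2) by simp
    qed
    have vE: "v \<in> E" using v H(3) by blast
    have buniq: "k = k'" if "x - sc k b \<in> H" "x - sc k' b \<in> H" for x k k'
    proof (rule ccontr)
      assume ne: "k \<noteq> k'"
      have "sc (k' - k) b \<in> H" using subspace_diff[OF H(1) that] by (simp add: scale_left_diff_distrib)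
      then have "sc (inverse (k' - k)) (sc (k' - k) b) \<in> H" using subspace_scale[OF H(1)] by blast
      then have "b \<in> H" using ne by simp
      then show False using H(6) by simp
    qed
    define \<beta> where "\<beta> x = (THE k. x - sc k b \<in> H)" for x
    have \<beta>eq: "\<beta> x = k" if "x - sc k b \<in> H" for x k
      unfolding \<beta>_def using that buniq by (intro the_equality) auto
    have \<beta>H: "x - sc (\<beta> x) b \<in> H" if "x \<in> E" for x
      using H(7)[OF that] \<beta>eq by metis
    have \<beta>add: "\<beta> (x + y) = \<beta> x + \<beta> y" if "x \<in> E" "y \<in> E" for x y
    proof (rule \<beta>eq)
      have eq: "(x + y) - sc (\<beta> x + \<beta> y) b = (x - sc (\<beta> x) b) + (y - sc (\<beta> y) b)"
        by (simp add: scale_left_distrib algebra_simps)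
      show "(x + y) - sc (\<beta> x + \<beta> y) b \<in> H" unfolding eq by (rule subspace_add[OF H(1) \<beta>H[OF that(1)] \<beta>H[OF that(2)]])
    qed
    have \<beta>scale: "\<beta> (sc c x) = c * \<beta> x" if "x \<in> E" for x c
    proof (rule \<beta>eq)
      have eq: "sc c x - sc (c * \<beta> x) b = sc c (x - sc (\<beta> x) b)"
        by (simp add: scale_right_diff_distrib)
      show "sc c x - sc (c * \<beta> x) b \<in> H" unfolding eq by (rule subspace_scale[OF H(1) \<beta>H[OF that]])
    qed
    have \<beta>v: "\<beta> v = 0" using \<beta>eq[of v 0] v(1) by simp
    have \<beta>b: "\<beta> b = 1" using \<beta>eq[of b 1] subspace_0[OF H(1)] by simp
    define g2 where "g2 x = (if x \<in> E then \<beta> x else 0)" for x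
    define g1 where "g1 x = (if x \<in> E then f1 (x - sc (\<beta> x) b) else 0)" for x
    have g2d: "g2 \<in> dual sc E" unfolding dual_def g2_def using \<beta>add \<beta>scale E_add E_scale by auto
    have g1d: "g1 \<in> dual sc E"
      unfolding dual_def
    proof (intro CollectI conjI ballI allI impI)
      fix x y assume xy: "x \<in> E" "y \<in> E"
      have eq: "(x + y) - sc (\<beta> (x + y)) b = (x - sc (\<beta> x) b) + (y - sc (\<beta> y) b)"
        using \<beta>add[OF xy] by (simp add: scale_left_distrib algebra_simps)
      have "g1 (x + y) = f1 ((x + y) - sc (\<beta> (x + y)) b)" unfolding g1_def using xy E_add by simp
      also have "\<dots> = f1 ((x - sc (\<beta> x) b) + (y - sc (\<beta> y) b))" by (simp only: eq)
      also have "\<dots> = g1 x + g1 y" unfolding g1_def using xy dual_add[OF f1(1) \<beta>H[OF xy(1)] \<beta>H[OF xy(2)]] by simp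
      finally show "g1 (x + y) = g1 x + g1 y" .
    next
      fix c x assume x: "x \<in> E"
      have eq: "sc c x - sc (\<beta> (sc c x)) b = sc c (x - sc (\<beta> x) b)"
        using \<beta>scale[OF x] by (simp add: scale_right_diff_distrib)
      have "g1 (sc c x) = f1 (sc c x - sc (\<beta> (sc c x)) b)" unfolding g1_def using x E_scale by simp
      also have "\<dots> = f1 (sc c (x - sc (\<beta> x) b))" by (simp only: eq)
      also have "\<dots> = c * g1 x" unfolding g1_def using x dual_scale[OF f1(1) \<beta>H[OF x]] by simp
      finally show "g1 (sc c x) = c * g1 x" .
    qed (simp add: g1_def)
    have e: "g1 v = 1" "g1 b = 0" "g2 v = 0" "g2 b = 1"
      using vE H(5) \<beta>v \<beta>b v(2) dual_0[OF H(1) f1(1)] by (simp_all add: g1_def g2_def)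
    interpret N3: NA3 sc av E N g1 g2 v b bv \<iota>
      by (unfold_locales) (use g1d g2d vE H(5) e bv av compl nns fdim in auto)
    have "N3.good" using h2[OF N3.FF_subspace _ N3.FF_dim] N3.FF_dual unfolding N3.good_def by blast
    then have ext: N3.Ext using N3.good_iff_Ext by simp
    have WWc: "x \<in> N3.WW \<longleftrightarrow> x \<in> H \<and> f1 x = 0" for x
    proof
      assume x: "x \<in> N3.WW"
      then have xE: "x \<in> E" and "g2 x = 0" "g1 x = 0" using N3.WW_def by auto
      then have "\<beta> x = 0" by (simp add: g2_def)
      then have "x \<in> H" using \<beta>H[OF xE] by simp
      moreover have "f1 x = 0" using \<open>g1 x = 0\<close> \<open>\<beta> x = 0\<close> xE by (simp add: g1_def)
      ultimately show "x \<in> H \<and> f1 x = 0" by simp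
    next
      assume x: "x \<in> H \<and> f1 x = 0"
      then have xE: "x \<in> E" using H(3) by blast
      have "\<beta> x = 0" using \<beta>eq[of x 0] x by simp
      then show "x \<in> N3.WW" unfolding N3.WW_def using xE x by (simp add: g1_def g2_def)
    qed
    have onH: "av (f1 x) \<le> N x" if "x \<in> H" for x using opnorm_props(2)[OF H(1,3) f1(1) that] f1(3) by simp
    have q1: "1 \<le> N3.q v"
    proof (rule N3.q_lower[OF vE])
      fix w assume w: "w \<in> N3.WW"
      then have wH: "w \<in> H" "f1 w = 0" using WWc by auto
      have "f1 (v + w) = 1" using dual_add[OF f1(1) v(1) wH(1)] v(2) wH(2) by simp
      then show "1 \<le> N (v + w)" using onH[OF subspace_add[OF H(1) v(1) wH(1)]] by simp
    qed
    have qle: "N3.q v \<le> 1"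
    proof -
      have qp: "0 < N3.q v" using q1 by simp
      have "opnorm av H N f1 \<le> inverse (N3.q v)"
      proof (rule opnorm_props(3)[OF H(1,3) f1(1)])
        show "0 \<le> inverse (N3.q v)" using qp by simp
        fix x assume x: "x \<in> H"
        define w0 where "w0 = x - sc (f1 x) v"
        have w0H: "w0 \<in> H" unfolding w0_def using subspace_diff[OF H(1) x subspace_scale[OF H(1) v(1)]] .
        have "f1 w0 = 0" unfolding w0_def using dual_diff[OF H(1) f1(1) x subspace_scale[OF H(1) v(1)]]
            dual_scale[OF f1(1) v(1)] v(2) by simp
        then have w0W: "w0 \<in> N3.WW" using WWc w0H by simp
        have "av (f1 x) * N3.q v \<le> N (sc (f1 x) v + w0)" using N3.q_scale_le[OF vE w0W] .
        also have "sc (f1 x) v + w0 = x" unfolding w0_def by simp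
        finally show "av (f1 x) \<le> inverse (N3.q v) * N x" using qp by (simp add: field_simps)
      qed
      then have "1 \<le> inverse (N3.q v)" using f1(3) by simp
      then show ?thesis using qp by (simp add: field_simps)
    qed
    have qv: "N3.q v = av 1" using q1 qle by simp
    have "\<forall>v\<in>E. \<forall>c. c \<noteq> 0 \<and> N3.q v = av c \<longrightarrow> (\<exists>g\<in>N3.FF. g v = c \<and> nrm g \<le> 1)"
      using ext unfolding N3.Ext_def .
    then have "\<exists>g\<in>N3.FF. g v = 1 \<and> nrm g \<le> 1" using vE qv by simp
    then obtain g where g: "g \<in> N3.FF" "g v = 1" "nrm g \<le> 1" by blast
    have gd: "g \<in> dual sc E" using N3.FF_dual g(1) .
    have gH: "g x = f1 x" if x: "x \<in> H" for x
    proof -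
      define w0 where "w0 = x - sc (f1 x) v"
      have w0H: "w0 \<in> H" unfolding w0_def using subspace_diff[OF H(1) x subspace_scale[OF H(1) v(1)]] .
      have "f1 w0 = 0" unfolding w0_def using dual_diff[OF H(1) f1(1) x subspace_scale[OF H(1) v(1)]]
          dual_scale[OF f1(1) v(1)] v(2) by simp
      then have "g w0 = 0" using WWc w0H N3.FF_vanish[OF g(1)] by simp
      moreover have "x = sc (f1 x) v + w0" unfolding w0_def by simp
      moreover have "w0 \<in> E" using w0H H(3) by blast
      ultimately show ?thesis using dual_add[OF gd E_scale[OF vE]] dual_scale[OF gd vE] g(2) by (metis mult_1_right add.right_neutral)
    qed
    have gD: "\<forall>x\<in>D. g x = f x" using gH f1(2) H(2) by auto
    have "1 \<le> nrm g" using opnorm_ext_ge[of D E g f] D E_sub gd fd gD fn by auto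
    then have "nrm g = 1" using g(3) by simp
    then show ?thesis using gd gD by blast
  qed
qed

end

theorem mainTheorem7:
  fixes av :: "'a::field \<Rightarrow> real" and bv :: "'b::field \<Rightarrow> real" and \<iota> :: "'a \<Rightarrow> 'b"
    and sc :: "'a \<Rightarrow> 'e::ab_group_add \<Rightarrow> 'e" and E :: "'e set" and N :: "'e \<Rightarrow> real"
    and n :: nat
  assumes "nonarch_abs av" and "nontrivial_abs av" and "abs_complete av"
    and "\<not> spherically_complete av"
    and "nonarch_abs bv" and "spherically_complete bv" and "immediate_extension av bv \<iota>"
    and "vector_space sc" and "na_normed_space av sc E N"
    and "fin_dim sc E" and "vector_space.dim sc E = n"
  shows "SE av sc E N \<longleftrightarrow>
    ((\<forall>D. module.subspace sc D \<and> D \<subseteq> E \<and> vector_space.dim sc D + 1 = n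
          \<longrightarrow> SE av sc D N)
     \<and> (\<forall>F. module.subspace dscale F \<and> F \<subseteq> dual sc E \<and> vector_space.dim dscale F = 2
          \<longrightarrow> orth_dim dscale F (opnorm av E N) = 2
              \<or> (\<exists>x t. x \<notin> range \<iota> \<and> 0 < t \<and> t * dist_to_K bv \<iota> x \<notin> value_group av
                    \<and> iso_span1x bv \<iota> dscale F (opnorm av E N) x t)))"
proof -
  interpret NA sc av E N
    by (rule NA.intro[OF assms(8)]) (unfold_locales, use assms in auto)
  show ?thesis
  proof
    assume se: "SE av sc E N"
    show "(\<forall>D. module.subspace sc D \<and> D \<subseteq> E \<and> vector_space.dim sc D + 1 = n
          \<longrightarrow> SE av sc D N)
     \<and> (\<forall>F. module.subspace dscale F \<and> F \<subseteq> dual sc E \<and> vector_space.dim dscale F = 2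
          \<longrightarrow> orth_dim dscale F (opnorm av E N) = 2
              \<or> (\<exists>x t. x \<notin> range \<iota> \<and> 0 < t \<and> t * dist_to_K bv \<iota> x \<notin> value_group av
                    \<and> iso_span1x bv \<iota> dscale F (opnorm av E N) x t))"
    proof (intro conjI allI impI)
      fix D assume "module.subspace sc D \<and> D \<subseteq> E \<and> vector_space.dim sc D + 1 = n"
      then show "SE av sc D N" using SE_sub[OF se] by blast
    next
      fix F assume F: "module.subspace dscale F \<and> F \<subseteq> dual sc E \<and> vector_space.dim dscale F = 2"
      show "orth_dim dscale F (opnorm av E N) = 2
              \<or> (\<exists>x t. x \<notin> range \<iota> \<and> 0 < t \<and> t * dist_to_K bv \<iota> x \<notin> value_group av
                    \<and> iso_span1x bv \<iota> dscale F (opnorm av E N) x t)"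
        using good_of_SE[OF assms(5,6,7) se] F by blast
    qed
  next
    assume h: "(\<forall>D. module.subspace sc D \<and> D \<subseteq> E \<and> vector_space.dim sc D + 1 = n
          \<longrightarrow> SE av sc D N)
     \<and> (\<forall>F. module.subspace dscale F \<and> F \<subseteq> dual sc E \<and> vector_space.dim dscale F = 2
          \<longrightarrow> orth_dim dscale F (opnorm av E N) = 2
              \<or> (\<exists>x t. x \<notin> range \<iota> \<and> 0 < t \<and> t * dist_to_K bv \<iota> x \<notin> value_group av
                    \<and> iso_span1x bv \<iota> dscale F (opnorm av E N) x t))"
    show "SE av sc E N"
    proof (rule SE_of_parts[OF assms(5,6,7)])
      fix D assume "subspace D" "D \<subseteq> E" "dim D + 1 = dim E"
      then show "SE av sc D N" using h assms(11) by blast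
    next
      fix F assume "dv.subspace F" "F \<subseteq> dual sc E" "dv.dim F = 2"
      then show "orth_dim dscale F nrm = 2 \<or>
       (\<exists>x t. x \<notin> range \<iota> \<and> 0 < t \<and> t * dist_to_K bv \<iota> x \<notin> value_group av
          \<and> iso_span1x bv \<iota> dscale F nrm x t)" using h by blast
    qed
  qed
qed

end
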